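(* Fix $\delta\in[0,1)$ and consider the logistic bandit interaction with actions chosen by THaTS. For all $t\ge1$, letting $A_t^{\mathrm{MU}}\in\arg\max_{a\in\mathcal A(S_t)}\max_{\theta\in\mathcal V_t}U(S_t,a,\theta,L_t)$ and $\omega_t^{\mathrm{MU}}\in\arg\min_{\theta\in\mathcal E_t(\delta,\bar\theta_t)}\dot\mu(\phi(S_t,A_t^{\mathrm{MU}})^\top\theta)$, it holds almost surely that $$\mathbb E\big[U(S_t,A_t^{\mathrm{MU}},\omega_t^{\mathrm{MU}},L_t)\,\big|\,\mathcal F_{t-1}\big]\le\sqrt{\frac{\pi d}{2}}\;\mathbb E\big[U(S_t,A_t,\bar\theta_t,L_t)\,\big|\,\mathcal F_{t-1}\big].$$
   Context: Logistic setting: $\mu(x)=1/(1+e^{-x})$; context space $\mathcal S$ with distribution $\nu$; finite nonempty action sets $\mathcal A(s)$; features $\phi(s,a)\in\mathbb R^d$ with $\|\phi(s,a)\|\le1$; unknown $\theta_*$ with $\|\theta_*\|\le S$; $\mathbb B_d(S)$ the closed ball of radius $S$. Rounds: $S_t\sim\nu$ independent of the past, $A_t\in\mathcal A(S_t)$, $X_t\in\{0,1\}$ Bernoulli with mean $\mu(\phi(S_t,A_t)^\top\theta_* )$. $\mathcal F_{t-1}=\sigma((S_i,A_i,X_i)_{i<t}$, previous internal randomness$)$. $U(s,a,\theta,L)=\dot\mu(\phi(s,a)^\top\theta)\|\phi(s,a)\|_{L^{-1}}$, $\|x\|_M=\sqrt{x^\top Mx}$. With $\phi_i=\phi(S_i,A_i)$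 and $\lambda>0$: $\mathcal L_t^\lambda(\theta)=\lambda\|\theta\|^2-\sum_{i<t}[X_i\log\mu(\phi_i^\top\theta)+(1-X_i)\log(1-\mu(\phi_i^\top\theta))]$; $\bar\theta_t=\arg\min_{\mathbb B_d(S)}\mathcal L_t^\lambda$; $\beta_t(\delta)>0$ a deterministic radius; $\mathcal E_t(\delta,\theta_\circ)=\{\theta\in\mathbb B_d(S):\mathcal L_t^\lambda(\theta)-\mathcal L_t^\lambda(\theta_\circ)\le2\beta_t(\delta)^2\}$; $\mathcal V_t=\bigcap_{i=1}^{t-1}\mathcal E_i(\delta,\bar\theta_i)$ (empty intersection $=\mathbb R^d$). $L_1=\lambda I$, $L_{i+1}=L_i+\dot\mu(\phi_i^\top\theta_i')\phi_i\phi_i^\top$ with $\theta_i'=\arg\min_{\theta\in\mathcal E_i(\delta,\bar\theta_i)}\dot\mu(\phi_i^\top\theta)$. THaTS rule at round $t$: given $\mathcal F_{t-1}$ and $S_t$, sample $\tilde\theta_t\sim\mathcal N(0,L_t^{-1})$ and choose $A_t\in\arg\max_{a\in\mathcal A(S_t)}\dot\mu(\phi(S_t,a)^\top\bar\theta_t)|\phi(S_t,a)^\top\tilde\theta_t|$. *)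

theory Defs
  imports "HOL-Probability.Probability"
begin

definition mu :: "real \<Rightarrow> real" where
  "mu x = 1 / (1 + exp (- x))"

definition mudot :: "real \<Rightarrow> real" where
  "mudot x = mu x * (1 - mu x)"

definition inv_norm :: "real^'d \<Rightarrow> real^'d^'d \<Rightarrow> real" where
  "inv_norm v L = sqrt (v \<bullet> (matrix_inv L *v v))"

definition Ubonus :: "('s \<Rightarrow> 'a \<Rightarrow> real^'d) \<Rightarrow> 's \<Rightarrow> 'a \<Rightarrow> real^'d \<Rightarrow> real^'d^'d \<Rightarrow> real" where
  "Ubonus phi s a \<theta> L = mudot (phi s a \<bullet> \<theta>) * inv_norm (phi s a) L"

definition loss :: "real \<Rightarrow> ('s \<Rightarrow> 'a \<Rightarrow> real^'d) \<Rightarrow> (nat \<Rightarrow> 's) \<Rightarrow> (nat \<Rightarrow> 'a) \<Rightarrow> (nat \<Rightarrow> real)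
    \<Rightarrow> nat \<Rightarrow> real^'d \<Rightarrow> real" where
  "loss lam phi s a x t \<theta> = lam * (norm \<theta>)\<^sup>2
     - (\<Sum>i\<in>{1..<t}. x i * ln (mu (phi (s i) (a i) \<bullet> \<theta>))
                     + (1 - x i) * ln (1 - mu (phi (s i) (a i) \<bullet> \<theta>)))"

definition theta_bar :: "real \<Rightarrow> real \<Rightarrow> ('s \<Rightarrow> 'a \<Rightarrow> real^'d) \<Rightarrow> (nat \<Rightarrow> 's) \<Rightarrow> (nat \<Rightarrow> 'a)
    \<Rightarrow> (nat \<Rightarrow> real) \<Rightarrow> nat \<Rightarrow> real^'d" where
  "theta_bar lam S phi s a x t =
     (SOME \<theta>. \<theta> \<in> cball 0 S \<and> (\<forall>\<theta>'\<in>cball 0 S. loss lam phi s a x t \<theta> \<le> loss lam phi s a x t \<theta>'))"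

text \<open>Confidence set E_t(delta, theta0); beta t stands for beta_t(delta).\<close>
definition Eset :: "real \<Rightarrow> real \<Rightarrow> (nat \<Rightarrow> real) \<Rightarrow> ('s \<Rightarrow> 'a \<Rightarrow> real^'d) \<Rightarrow> (nat \<Rightarrow> 's)
    \<Rightarrow> (nat \<Rightarrow> 'a) \<Rightarrow> (nat \<Rightarrow> real) \<Rightarrow> nat \<Rightarrow> real^'d \<Rightarrow> (real^'d) set" where
  "Eset lam S beta phi s a x t \<theta>0 =
     {\<theta> \<in> cball 0 S. loss lam phi s a x t \<theta> - loss lam phi s a x t \<theta>0 \<le> 2 * (beta t)\<^sup>2}"

definition Ebar :: "real \<Rightarrow> real \<Rightarrow> (nat \<Rightarrow> real) \<Rightarrow> ('s \<Rightarrow> 'a \<Rightarrow> real^'d) \<Rightarrow> (nat \<Rightarrow> 's)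
    \<Rightarrow> (nat \<Rightarrow> 'a) \<Rightarrow> (nat \<Rightarrow> real) \<Rightarrow> nat \<Rightarrow> (real^'d) set" where
  "Ebar lam S beta phi s a x t = Eset lam S beta phi s a x t (theta_bar lam S phi s a x t)"

text \<open>V_t = intersection of E_i(delta, theta_bar_i), i = 1..t-1 (empty intersection = UNIV).\<close>
definition Vset :: "real \<Rightarrow> real \<Rightarrow> (nat \<Rightarrow> real) \<Rightarrow> ('s \<Rightarrow> 'a \<Rightarrow> real^'d) \<Rightarrow> (nat \<Rightarrow> 's)
    \<Rightarrow> (nat \<Rightarrow> 'a) \<Rightarrow> (nat \<Rightarrow> real) \<Rightarrow> nat \<Rightarrow> (real^'d) set" where
  "Vset lam S beta phi s a x t = (\<Inter>i\<in>{1..<t}. Ebar lam S beta phi s a x i)"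

definition outer :: "real^'d \<Rightarrow> real^'d^'d" where
  "outer v = (\<chi> i j. v $ i * v $ j)"

text \<open>Lmat n is L_{n+1}: L_1 = lam I and
  L_{i+1} = L_i + mudot(phi_i . theta'_i) phi_i phi_i^T, where
  mudot(phi_i . theta'_i) = min over E_i(delta, theta_bar_i) of mudot(phi_i . theta).\<close>
primrec Lmat :: "real \<Rightarrow> real \<Rightarrow> (nat \<Rightarrow> real) \<Rightarrow> ('s \<Rightarrow> 'a \<Rightarrow> real^'d) \<Rightarrow> (nat \<Rightarrow> 's)
    \<Rightarrow> (nat \<Rightarrow> 'a) \<Rightarrow> (nat \<Rightarrow> real) \<Rightarrow> nat \<Rightarrow> real^'d^'d" where
  "Lmat lam S beta phi s a x 0 = lam *\<^sub>R mat 1"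
| "Lmat lam S beta phi s a x (Suc n) = Lmat lam S beta phi s a x n
     + (INF \<theta>\<in>Ebar lam S beta phi s a x (Suc n). mudot (phi (s (Suc n)) (a (Suc n)) \<bullet> \<theta>))
       *\<^sub>R outer (phi (s (Suc n)) (a (Suc n)))"

definition Lt :: "real \<Rightarrow> real \<Rightarrow> (nat \<Rightarrow> real) \<Rightarrow> ('s \<Rightarrow> 'a \<Rightarrow> real^'d) \<Rightarrow> (nat \<Rightarrow> 's)
    \<Rightarrow> (nat \<Rightarrow> 'a) \<Rightarrow> (nat \<Rightarrow> real) \<Rightarrow> nat \<Rightarrow> real^'d^'d" where
  "Lt lam S beta phi s a x t = Lmat lam S beta phi s a x (t - 1)"

text \<open>Centred Gaussian N(0, L^{-1}) on R^d, given by its density w.r.t. Lebesgue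
  measure in terms of the precision matrix L (positive definite).\<close>
definition gaussian_prec :: "real^'d^'d \<Rightarrow> (real^'d) measure" where
  "gaussian_prec L = density lborel
     (\<lambda>v. ennreal (sqrt (det L) / (2 * pi) powr (real CARD('d) / 2) * exp (- (v \<bullet> (L *v v)) / 2)))"

end

theory Submission
  imports Defs
begin
definition Qf :: "real^'d^'d \<Rightarrow> real^'d \<Rightarrow> real" where
  "Qf L v = v \<bullet> (L *v v)"

definition pdm :: "real^'d^'d \<Rightarrow> bool" where
  "pdm L \<longleftrightarrow> transpose L = L \<and> (\<exists>e>0. \<forall>v. e * (norm v)\<^sup>2 \<le> Qf L v)"

lemma sym_inner:
  fixes L :: "real^'d^'d"
  assumes "transpose L = L"
  shows "x \<bullet> (L *v y) = y \<bullet> (L *v x)"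
proof -
  have "x \<bullet> (L *v y) = (x v* L) \<bullet> y" by (simp add: dot_lmul_matrix)
  also have "x v* L = transpose L *v x" by simp
  also have "\<dots> = L *v x" using assms by simp
  finally show ?thesis by (simp add: inner_commute)
qed

lemma pdm_inv:
  fixes L :: "real^'d^'d"
  assumes "pdm L"
  shows "L ** matrix_inv L = mat 1" "matrix_inv L ** L = mat 1"
proof -
  obtain e where e: "e > 0" "\<And>v. e * (norm v)\<^sup>2 \<le> Qf L v" using assms unfolding pdm_def by auto
  have "\<forall>x. L *v x = 0 \<longrightarrow> x = 0"
  proof (intro allI impI)
    fix x assume "L *v x = 0"
    then have "e * (norm x)\<^sup>2 \<le> 0" using e(2)[of x] by (simp add: Qf_def)
    then show "x = 0" using e(1) by (simp add: mult_le_0_iff)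
  qed
  then have "\<exists>B. B ** L = mat 1" using matrix_left_invertible_ker by blast
  then have "invertible L" using invertible_left_inverse by blast
  then have "\<exists>A'. L ** A' = mat 1 \<and> A' ** L = mat 1" unfolding invertible_def .
  then have "L ** matrix_inv L = mat 1 \<and> matrix_inv L ** L = mat 1"
    unfolding matrix_inv_def by (rule someI_ex)
  then show "L ** matrix_inv L = mat 1" "matrix_inv L ** L = mat 1" by auto
qed

lemma pdm_inv_vec:
  fixes L :: "real^'d^'d"
  assumes "pdm L"
  shows "L *v (matrix_inv L *v p) = p"
  using pdm_inv[OF assms] by (simp add: matrix_vector_mul_assoc)

lemma outer_mulv: "outer p *v v = (p \<bullet> v) *\<^sub>R p"
  by (simp add: outer_def vec_eq_iff matrix_vector_mult_def inner_vec_def sum_distrib_left mult_ac)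

lemma outer_transpose: "transpose (outer p) = outer p"
  by (simp add: outer_def transpose_def vec_eq_iff mult.commute)

lemma transpose_plus: "transpose (A + B) = transpose A + (transpose B :: real^'n^'n)"
  by (simp add: transpose_def vec_eq_iff)

lemma scaleR_mulv: "(c *\<^sub>R (M::real^'n^'m)) *v v = c *\<^sub>R (M *v v)"
  by (simp add: vec_eq_iff matrix_vector_mult_def sum_distrib_left mult_ac)

lemma Qf_update: "Qf (L + c *\<^sub>R outer p) v = Qf L v + c * (p \<bullet> v)\<^sup>2"
  by (simp add: Qf_def matrix_vector_mult_add_rdistrib outer_mulv inner_add_right power2_eq_square
      scaleR_mulv inner_commute)

lemma pdm_update:
  fixes L :: "real^'d^'d"
  assumes "pdm L" "c \<ge> 0"
  shows "pdm (L + c *\<^sub>R outer p)"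
proof -
  obtain e where e: "e > 0" "\<And>v. e * (norm v)\<^sup>2 \<le> Qf L v" using assms unfolding pdm_def by auto
  have "transpose (L + c *\<^sub>R outer p) = L + c *\<^sub>R outer p"
    using assms(1) by (simp add: pdm_def transpose_plus outer_transpose transpose_scalar)
  moreover have "\<forall>v. e * (norm v)\<^sup>2 \<le> Qf (L + c *\<^sub>R outer p) v"
    using e(2) assms(2) by (simp add: Qf_update) (meson add_increasing2 le_add_same_cancel1 mult_nonneg_nonneg zero_le_power2 order_trans)
  ultimately show ?thesis using e(1) unfolding pdm_def by blast
qed

lemma det_rank1_rows:
  fixes A :: "real^'n^'n" and u w :: "real^'n"
  assumes "finite K"
  shows "det (\<chi> i. if i \<in> K then A$i + u$i *s w else A$i)
       = det A + (\<Sum>k\<in>K. u$k * det (\<chi> i. if i = k then w else A$i))"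
  using assms
proof (induction K arbitrary: A rule: finite_induct)
  case empty
  then show ?case by (simp add: vec_lambda_eta)
next
  case (insert k K)
  define B where "B = (\<chi> i. if i = k then A$k + u$k *s w else A$i)"
  have eq1: "(\<chi> i. if i \<in> insert k K then A$i + u$i *s w else A$i)
        = (\<chi> i. if i \<in> K then B$i + u$i *s w else B$i)"
    using insert.hyps by (auto simp: B_def vec_eq_iff)
  have detB: "det B = det A + u$k * det (\<chi> i. if i = k then w else A$i)"
  proof -
    have "det B = det (\<chi> i. if i = k then A$k else A$i) + det (\<chi> i. if i = k then u$k *s w else A$i)"
      unfolding B_def by (rule det_row_add)
    also have "(\<chi> i. if i = k then A$k else A$i) = A" by (simp add: vec_eq_iff)
    also have "det (\<chi> i. if i = k then u$k *s w else A$i) = u$k * det (\<chi> i. if i = k then w else A$i)"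
      by (rule det_row_mul)
    finally show ?thesis .
  qed
  have detBj: "det (\<chi> i. if i = j then w else B$i) = det (\<chi> i. if i = j then w else A$i)" if "j \<in> K" for j
  proof -
    have jk: "j \<noteq> k" using that insert.hyps by auto
    let ?C = "(\<chi> i. if i = j then w else A$i) :: real^'n^'n"
    have "det (\<chi> r. if r = k then row k ?C + (u$k) *s row j ?C else row r ?C) = det ?C"
      using jk by (intro det_row_operation) auto
    moreover have "(\<chi> r. if r = k then row k ?C + (u$k) *s row j ?C else row r ?C) = (\<chi> i. if i = j then w else B$i)"
      using jk by (auto simp: vec_eq_iff row_def B_def)
    ultimately show ?thesis by simp
  qed
  show ?case
    unfolding eq1 insert.IH detB using insert.hyps detBj
    by (simp add: algebra_simps)
qed

lemma det_update:
  fixes L :: "real^'d^'d"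
  assumes "pdm L"
  shows "det (L + c *\<^sub>R outer p) = det L * (1 + c * (p \<bullet> (matrix_inv L *v p)))"
proof -
  define x where "x = matrix_inv L *v p"
  have Lx: "L *v x = p" unfolding x_def by (rule pdm_inv_vec[OF assms])
  have sym: "transpose L = L" using assms unfolding pdm_def by auto
  have symij: "L$i$j = L$j$i" for i j using sym by (metis transpose_def vec_lambda_beta)
  have "L + c *\<^sub>R outer p = (\<chi> i. if i \<in> UNIV then L$i + (c *\<^sub>R p)$i *s p else L$i)"
    by (simp add: vec_eq_iff outer_def)
  then have "det (L + c *\<^sub>R outer p) = det L + (\<Sum>k\<in>UNIV. (c *\<^sub>R p)$k * det (\<chi> i. if i = k then p else L$i))"
    using det_rank1_rows[of UNIV L "c *\<^sub>R p" p] by simp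
  moreover have cr: "det (\<chi> i. if i = k then p else L$i) = x$k * det L" for k
  proof -
    have "(\<chi> i. if i = k then p else L$i) = transpose (\<chi> i j. if j = k then (L *v x)$i else L$i$j)"
      by (simp add: Lx vec_eq_iff transpose_def symij)
    then show ?thesis by (simp add: cramer_lemma)
  qed
  ultimately have "det (L + c *\<^sub>R outer p) = det L + (\<Sum>k\<in>UNIV. c * (p$k * x$k)) * det L"
    by (simp add: sum_distrib_right sum_distrib_left mult_ac)
  also have "(\<Sum>k\<in>UNIV. c * (p$k * x$k)) = c * (p \<bullet> x)"
    by (simp add: inner_vec_def sum_distrib_left)
  finally show ?thesis unfolding x_def by (simp add: algebra_simps)
qed

lemma nn_translate:
  fixes f :: "'a::euclidean_space \<Rightarrow> ennreal"
  assumes [measurable]: "f \<in> borel_measurable borel"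
  shows "(\<integral>\<^sup>+x. f (c + x) \<partial>lborel) = (\<integral>\<^sup>+x. f x \<partial>lborel)"
proof -
  have "(\<integral>\<^sup>+x. f x \<partial>lborel) = (\<integral>\<^sup>+x. f x \<partial>(distr lborel borel ((+) c)))"
    by (simp add: lborel_distr_plus)
  also have "\<dots> = (\<integral>\<^sup>+x. f (c + x) \<partial>lborel)"
    by (subst nn_integral_distr) auto
  finally show ?thesis by simp
qed

lemma nn_scale:
  fixes f :: "'a::euclidean_space \<Rightarrow> ennreal"
  assumes [measurable]: "f \<in> borel_measurable borel" and c: "c \<noteq> 0"
  shows "(\<integral>\<^sup>+x. f x \<partial>lborel) = ennreal (\<bar>c\<bar> ^ DIM('a)) * (\<integral>\<^sup>+x. f (c *\<^sub>R x) \<partial>lborel)"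
proof -
  have "(\<integral>\<^sup>+x. f x \<partial>lborel) = (\<integral>\<^sup>+x. f x \<partial>(density (distr lborel borel (\<lambda>x. 0 + c *\<^sub>R x)) (\<lambda>_. \<bar>c\<bar>^DIM('a))))"
    using lborel_affine[OF c, of "0::'a"] by simp
  also have "\<dots> = ennreal (\<bar>c\<bar> ^ DIM('a)) * (\<integral>\<^sup>+x. f (c *\<^sub>R x) \<partial>lborel)"
    by (simp add: nn_integral_density nn_integral_distr nn_integral_cmult)
  finally show ?thesis .
qed

lemma gauss_1d:
  fixes b :: real assumes b: "b > 0"
  shows "(\<integral>\<^sup>+a. ennreal (exp (- (b * a\<^sup>2) / 2)) \<partial>lborel) = ennreal (sqrt (2 * pi / b))"
proof -
  define \<sigma> where "\<sigma> = 1 / sqrt b"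
  have eq: "exp (- (b * a\<^sup>2) / 2) = sqrt (2 * pi / b) * normal_density 0 \<sigma> a" for a
  proof -
    have "(1 / sqrt b)\<^sup>2 = 1/b" using b by (simp add: power_divide)
    then show ?thesis unfolding normal_density_def \<sigma>_def using b
      by (simp add: real_sqrt_divide real_sqrt_mult)
  qed
  have "(\<integral>\<^sup>+a. ennreal (normal_density 0 \<sigma> a) \<partial>lborel) = 1"
  proof -
    interpret prob_space "density lborel (normal_density 0 \<sigma>)" using b by (intro prob_space_normal_density) (simp add: \<sigma>_def)
    have "emeasure (density lborel (normal_density 0 \<sigma>)) UNIV = 1"
      using emeasure_space_1 by simp
    then show ?thesis by (simp add: emeasure_density)
  qed
  then show ?thesis
    unfolding eq using b by (subst ennreal_mult) (auto simp: nn_integral_cmult)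
qed

lemma FTC_inv_pow:
  assumes d: "d \<ge> 1"
  shows "(\<integral>\<^sup>+s. ennreal (1 / s ^ Suc d) * indicator {1..} s \<partial>lborel) = ennreal (1 / real d)"
proof -
  have m: "(\<lambda>s::real. 1 / s ^ Suc d) \<in> borel_measurable borel" by measurable
  have D: "DERIV (\<lambda>s. - 1 / (real d * s ^ d)) s :> 1 / s ^ Suc d" if "1 \<le> s" for s
  proof -
    have s: "s \<noteq> 0" using that by auto
    have p: "s ^ d = s * s ^ (d - 1)" using d by (cases d) auto
    have e: "real d * (real d * s ^ (d - 1)) / (real d * s ^ d)^2 = 1 / s ^ Suc d"
      using s d p by (simp add: power2_eq_square)
    have "DERIV (\<lambda>s. - 1 / (real d * s ^ d)) s :> real d * (real d * s ^ (d - 1)) / (real d * s ^ d)^2"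
      apply (intro derivative_eq_intros refl)
      using s d apply simp_all
      apply (simp add: field_simps power2_eq_square)
      done
    then show ?thesis using e by simp
  qed
  have nn: "0 \<le> 1 / s ^ Suc d" if "1 \<le> s" for s :: real using that by simp
  have lim: "((\<lambda>s::real. - 1 / (real d * s ^ d)) \<longlongrightarrow> 0) at_top"
  proof -
    have "((\<lambda>s::real. inverse (s ^ d)) \<longlongrightarrow> 0) at_top"
      using d by (intro tendsto_inverse_0_at_top filterlim_pow_at_top filterlim_ident) auto
    then have "((\<lambda>s::real. (- 1 / real d) * inverse (s ^ d)) \<longlongrightarrow> (- 1 / real d) * 0) at_top"
      by (intro tendsto_mult tendsto_const)
    then show ?thesis by (simp add: field_simps)
  qed
  have "(\<integral>\<^sup>+s. ennreal (1 / s ^ Suc d) * indicator {1..} s \<partial>lborel) = ennreal (0 - (- 1 / (real d * 1 ^ d)))"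
    using nn_integral_FTC_atLeast[OF m D nn lim] by simp
  then show ?thesis by simp
qed

lemma FTC_gauss_tail:
  assumes q: "q > 0"
  shows "(\<integral>\<^sup>+s. ennreal (s * q * exp (- (s\<^sup>2 * q) / 2)) * indicator {1..} s \<partial>lborel) = ennreal (exp (- q / 2))"
proof -
  have m: "(\<lambda>s::real. s * q * exp (- (s\<^sup>2 * q) / 2)) \<in> borel_measurable borel" by measurable
  have D: "DERIV (\<lambda>s. - exp (- (s\<^sup>2 * q) / 2)) s :> s * q * exp (- (s\<^sup>2 * q) / 2)" for s
    by (auto intro!: derivative_eq_intros simp: field_simps)
  have nn: "0 \<le> s * q * exp (- (s\<^sup>2 * q) / 2)" if "1 \<le> s" for s :: real using that q by simp
  have lim: "((\<lambda>s::real. - exp (- (s\<^sup>2 * q) / 2)) \<longlongrightarrow> 0) at_top"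
  proof -
    have "filterlim (\<lambda>s::real. (q/2) * s^2) at_top at_top"
      using q by (intro filterlim_tendsto_pos_mult_at_top[OF tendsto_const] filterlim_pow_at_top filterlim_ident) auto
    then have "filterlim (\<lambda>s::real. - ((q/2) * s^2)) at_bot at_top"
      by (simp add: filterlim_uminus_at_bot)
    then have "((\<lambda>s::real. exp (- ((q/2) * s^2))) \<longlongrightarrow> 0) at_top"
      by (rule filterlim_compose[OF exp_at_bot])
    then have "((\<lambda>s::real. - exp (- ((q/2) * s^2))) \<longlongrightarrow> - 0) at_top"
      by (rule tendsto_minus)
    then show ?thesis by (simp add: field_simps)
  qed
  have "(\<integral>\<^sup>+s. ennreal (s * q * exp (- (s\<^sup>2 * q) / 2)) * indicator {1..} s \<partial>lborel) = ennreal (0 - (- exp (- (1\<^sup>2 * q) / 2)))"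
    using nn_integral_FTC_atLeast[OF m D nn lim] by simp
  then show ?thesis by simp
qed


lemma abs_gauss_1d:
  fixes b :: real assumes b: "b > 0"
  shows "(\<integral>\<^sup>+a. ennreal (\<bar>a\<bar> * exp (- (b * a\<^sup>2) / 2)) \<partial>lborel) = ennreal (2 / b)"
proof -
  define f where "f a = ennreal (a * exp (- (b * a\<^sup>2) / 2)) * indicator {0..} a" for a :: real
  have fm[measurable]: "f \<in> borel_measurable borel" unfolding f_def by measurable
  have half: "(\<integral>\<^sup>+a. f a \<partial>lborel) = ennreal (1 / b)"
  proof -
    have m: "(\<lambda>s::real. s * exp (- (b * s\<^sup>2) / 2)) \<in> borel_measurable borel" by measurable
    have D: "DERIV (\<lambda>s. - exp (- (b * s\<^sup>2) / 2) / b) s :> s * exp (- (b * s\<^sup>2) / 2)" for s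
      using b by (auto intro!: derivative_eq_intros simp: field_simps)
    have nn: "0 \<le> s * exp (- (b * s\<^sup>2) / 2)" if "0 \<le> s" for s :: real using that by simp
    have lim: "((\<lambda>s::real. - exp (- (b * s\<^sup>2) / 2) / b) \<longlongrightarrow> 0) at_top"
    proof -
      have "filterlim (\<lambda>s::real. (b/2) * s^2) at_top at_top"
        using b by (intro filterlim_tendsto_pos_mult_at_top[OF tendsto_const] filterlim_pow_at_top filterlim_ident) auto
      then have "filterlim (\<lambda>s::real. - ((b/2) * s^2)) at_bot at_top"
        by (simp add: filterlim_uminus_at_bot)
      then have "((\<lambda>s::real. exp (- ((b/2) * s^2))) \<longlongrightarrow> 0) at_top"
        by (rule filterlim_compose[OF exp_at_bot])
      then have "((\<lambda>s::real. (- 1 / b) * exp (- ((b/2) * s^2))) \<longlongrightarrow> (- 1 / b) * 0) at_top"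
        by (intro tendsto_mult tendsto_const)
      then show ?thesis by (simp add: field_simps)
    qed
    have "(\<integral>\<^sup>+a. f a \<partial>lborel) = ennreal (0 - (- exp (- (b * 0\<^sup>2) / 2) / b))"
      unfolding f_def using nn_integral_FTC_atLeast[OF m D nn lim] by simp
    then show ?thesis by simp
  qed
  have refl: "(\<integral>\<^sup>+a. f (- a) \<partial>lborel) = (\<integral>\<^sup>+a. f a \<partial>lborel)"
    using nn_integral_real_affine[OF fm, of "-1" 0] by simp
  have split: "ennreal (\<bar>a\<bar> * exp (- (b * a\<^sup>2) / 2)) = f a + f (- a)" for a
    unfolding f_def by (cases "a \<ge> 0") (auto simp: indicator_def)
  have "(\<integral>\<^sup>+a. ennreal (\<bar>a\<bar> * exp (- (b * a\<^sup>2) / 2)) \<partial>lborel)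
      = (\<integral>\<^sup>+a. f a \<partial>lborel) + (\<integral>\<^sup>+a. f (- a) \<partial>lborel)"
    unfolding split by (rule nn_integral_add) auto
  also have "\<dots> = ennreal (2 / b)"
    unfolding refl half using b by (simp add: ennreal_plus[symmetric] del: ennreal_plus)
  finally show ?thesis .
qed

lemma GC:
  fixes \<alpha> :: "'a::euclidean_space \<Rightarrow> real" and g :: "'a \<Rightarrow> ennreal"
    and G1 k :: "real \<Rightarrow> ennreal" and u :: 'a
  assumes [measurable]: "\<alpha> \<in> borel_measurable borel" "g \<in> borel_measurable borel"
    "G1 \<in> borel_measurable borel" "k \<in> borel_measurable borel"
  assumes \<alpha>u: "\<And>v s. \<alpha> (v + s *\<^sub>R u) = \<alpha> v + s"
  assumes gu: "\<And>v s. g (v + s *\<^sub>R u) = g v"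
  shows "(\<integral>\<^sup>+v. G1 (\<alpha> v) * g v \<partial>lborel) * (\<integral>\<^sup>+s. k s \<partial>lborel)
       = (\<integral>\<^sup>+s. G1 s \<partial>lborel) * (\<integral>\<^sup>+v. k (\<alpha> v) * g v \<partial>lborel)"
proof -
  define D where "D = (\<integral>\<^sup>+s. (\<integral>\<^sup>+v. G1 (\<alpha> v + s) * k (\<alpha> v) * g v \<partial>lborel) \<partial>lborel)"
  have "D = (\<integral>\<^sup>+v. (\<integral>\<^sup>+s. G1 (\<alpha> v + s) * k (\<alpha> v) * g v \<partial>lborel) \<partial>lborel)"
    unfolding D_def by (rule lborel_pair.Fubini') measurable
  also have "\<dots> = (\<integral>\<^sup>+v. (\<integral>\<^sup>+s. G1 s \<partial>lborel) * (k (\<alpha> v) * g v) \<partial>lborel)"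
  proof (rule nn_integral_cong)
    fix v
    have "(\<integral>\<^sup>+s. G1 (\<alpha> v + s) * k (\<alpha> v) * g v \<partial>lborel) = (\<integral>\<^sup>+s. G1 (\<alpha> v + s) \<partial>lborel) * (k (\<alpha> v) * g v)"
      by (simp add: nn_integral_multc mult.assoc)
    also have "(\<integral>\<^sup>+s. G1 (\<alpha> v + s) \<partial>lborel) = (\<integral>\<^sup>+s. G1 s \<partial>lborel)"
      by (rule nn_translate) measurable
    finally show "(\<integral>\<^sup>+s. G1 (\<alpha> v + s) * k (\<alpha> v) * g v \<partial>lborel) = (\<integral>\<^sup>+s. G1 s \<partial>lborel) * (k (\<alpha> v) * g v)" .
  qed
  also have "\<dots> = (\<integral>\<^sup>+s. G1 s \<partial>lborel) * (\<integral>\<^sup>+v. k (\<alpha> v) * g v \<partial>lborel)"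
    by (rule nn_integral_cmult) measurable
  finally have D1: "D = (\<integral>\<^sup>+s. G1 s \<partial>lborel) * (\<integral>\<^sup>+v. k (\<alpha> v) * g v \<partial>lborel)" .
  have "D = (\<integral>\<^sup>+s. (\<integral>\<^sup>+v. G1 (\<alpha> v) * k (\<alpha> v - s) * g v \<partial>lborel) \<partial>lborel)"
    unfolding D_def
  proof (rule nn_integral_cong)
    fix s
    have "(\<integral>\<^sup>+v. G1 (\<alpha> v + s) * k (\<alpha> v) * g v \<partial>lborel)
        = (\<integral>\<^sup>+v. G1 (\<alpha> ((- s) *\<^sub>R u + v) + s) * k (\<alpha> ((- s) *\<^sub>R u + v)) * g ((- s) *\<^sub>R u + v) \<partial>lborel)"
      by (rule nn_translate[symmetric]) measurable
    also have "\<dots> = (\<integral>\<^sup>+v. G1 (\<alpha> v) * k (\<alpha> v - s) * g v \<partial>lborel)"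
    proof -
      have a1: "\<alpha> ((- s) *\<^sub>R u + v) = \<alpha> v - s" for v using \<alpha>u[of v "-s"] by (simp add: add.commute)
      have g1: "g ((- s) *\<^sub>R u + v) = g v" for v using gu[of v "-s"] by (simp add: add.commute)
      show ?thesis unfolding a1 g1 by simp
    qed
    finally show "(\<integral>\<^sup>+v. G1 (\<alpha> v + s) * k (\<alpha> v) * g v \<partial>lborel) = (\<integral>\<^sup>+v. G1 (\<alpha> v) * k (\<alpha> v - s) * g v \<partial>lborel)" .
  qed
  also have "\<dots> = (\<integral>\<^sup>+v. (\<integral>\<^sup>+s. G1 (\<alpha> v) * k (\<alpha> v - s) * g v \<partial>lborel) \<partial>lborel)"
    by (rule lborel_pair.Fubini') measurable
  also have "\<dots> = (\<integral>\<^sup>+v. G1 (\<alpha> v) * g v * (\<integral>\<^sup>+s. k s \<partial>lborel) \<partial>lborel)"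
  proof (rule nn_integral_cong)
    fix v
    have "(\<integral>\<^sup>+s. G1 (\<alpha> v) * k (\<alpha> v - s) * g v \<partial>lborel) = G1 (\<alpha> v) * g v * (\<integral>\<^sup>+s. k (\<alpha> v + (-1) * s) \<partial>lborel)"
      by (subst nn_integral_cmult[symmetric]) (auto simp: mult_ac intro!: nn_integral_cong)
    also have "(\<integral>\<^sup>+s. k (\<alpha> v + (-1) * s) \<partial>lborel) = (\<integral>\<^sup>+s. k s \<partial>lborel)"
      using nn_integral_real_affine[of k "-1" "\<alpha> v"] by simp
    finally show "(\<integral>\<^sup>+s. G1 (\<alpha> v) * k (\<alpha> v - s) * g v \<partial>lborel) = G1 (\<alpha> v) * g v * (\<integral>\<^sup>+s. k s \<partial>lborel)" .
  qed
  also have "\<dots> = (\<integral>\<^sup>+v. G1 (\<alpha> v) * g v \<partial>lborel) * (\<integral>\<^sup>+s. k s \<partial>lborel)"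
    by (rule nn_integral_multc) measurable
  finally show ?thesis using D1 by simp
qed


lemma Qf_cont: "continuous_on UNIV (Qf L)"
  unfolding Qf_def by (intro continuous_intros linear_continuous_on matrix_vector_mul_linear)

lemma Qf_meas[measurable]: "Qf L \<in> borel_measurable borel"
  by (rule borel_measurable_continuous_onI[OF Qf_cont])

lemma Qf_shift:
  fixes L :: "real^'d^'d"
  assumes "pdm L"
  shows "Qf L (v + s *\<^sub>R (matrix_inv L *v p)) = Qf L v + 2 * s * (p \<bullet> v) + s\<^sup>2 * (p \<bullet> (matrix_inv L *v p))"
proof -
  define u where "u = matrix_inv L *v p"
  have Lu: "L *v u = p" unfolding u_def by (rule pdm_inv_vec[OF assms])
  have sym: "transpose L = L" using assms unfolding pdm_def by auto
  have uv: "u \<bullet> (L *v v) = p \<bullet> v" using sym_inner[OF sym, of u v] Lu by (simp add: inner_commute)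
  have Lvs: "L *v (v + s *\<^sub>R u) = L *v v + s *\<^sub>R p"
    by (simp add: matrix_vector_right_distrib matrix_vector_mult_scaleR Lu)
  have "Qf L (v + s *\<^sub>R u) = v \<bullet> (L *v v) + s * (v \<bullet> p) + s * (u \<bullet> (L *v v)) + s * s * (u \<bullet> p)"
    unfolding Qf_def Lvs by (simp add: inner_add_left inner_add_right algebra_simps)
  also have "\<dots> = Qf L v + 2 * s * (p \<bullet> v) + s\<^sup>2 * (p \<bullet> u)"
    using uv by (simp add: Qf_def inner_commute power2_eq_square)
  finally show ?thesis unfolding u_def .
qed

lemma m2_pos:
  fixes L :: "real^'d^'d"
  assumes "pdm L" "p \<noteq> 0"
  shows "p \<bullet> (matrix_inv L *v p) > 0"
proof -
  define u where "u = matrix_inv L *v p"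
  have Lu: "L *v u = p" unfolding u_def by (rule pdm_inv_vec[OF assms(1)])
  obtain e where e: "e > 0" "\<And>v. e * (norm v)\<^sup>2 \<le> Qf L v" using assms unfolding pdm_def by auto
  have "u \<noteq> 0" using Lu assms(2) by auto
  then have "0 < e * (norm u)\<^sup>2" using e(1) by simp
  also have "\<dots> \<le> Qf L u" by (rule e(2))
  also have "Qf L u = p \<bullet> u" by (simp add: Qf_def Lu inner_commute)
  finally show ?thesis unfolding u_def .
qed

lemma line_lemma:
  fixes L :: "real^'d^'d" and p :: "real^'d" and F :: "real \<Rightarrow> ennreal"
  assumes L: "pdm L" and p: "p \<noteq> 0" and [measurable]: "F \<in> borel_measurable borel"
  defines "m2 \<equiv> p \<bullet> (matrix_inv L *v p)"
  shows "(\<integral>\<^sup>+v. F (p \<bullet> v) * ennreal (exp (- Qf L v / 2)) \<partial>lborel) * (\<integral>\<^sup>+a. ennreal (exp (- (m2 * a\<^sup>2) / 2)) \<partial>lborel)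
       = (\<integral>\<^sup>+a. F (m2 * a) * ennreal (exp (- (m2 * a\<^sup>2) / 2)) \<partial>lborel) * (\<integral>\<^sup>+v. ennreal (exp (- Qf L v / 2)) \<partial>lborel)"
proof -
  define u where "u = matrix_inv L *v p"
  have m2: "m2 > 0" unfolding m2_def using m2_pos[OF L p] .
  have pu: "p \<bullet> u = m2" unfolding u_def m2_def ..
  define \<alpha> where "\<alpha> v = (p \<bullet> v) / m2" for v
  define P where "P v = v - \<alpha> v *\<^sub>R u" for v
  define g where "g v = ennreal (exp (- Qf L (P v) / 2))" for v
  have sh: "Qf L (v + s *\<^sub>R u) = Qf L v + 2 * s * (p \<bullet> v) + s\<^sup>2 * m2" for v s
    using Qf_shift[OF L, of v s p] unfolding u_def m2_def .
  have \<alpha>u: "\<alpha> (v + s *\<^sub>R u) = \<alpha> v + s" for v s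
    using m2 by (simp add: \<alpha>_def inner_add_right pu add_divide_distrib)
  have Pu: "P (v + s *\<^sub>R u) = P v" for v s
    by (simp add: P_def \<alpha>u algebra_simps)
  have gu: "g (v + s *\<^sub>R u) = g v" for v s by (simp add: g_def Pu)
  have pP: "p \<bullet> P v = 0" for v
    using m2 by (simp add: P_def \<alpha>_def inner_diff_right pu)
  have Qdec: "Qf L v = Qf L (P v) + m2 * (\<alpha> v)\<^sup>2" for v
  proof -
    have "v = P v + \<alpha> v *\<^sub>R u" by (simp add: P_def)
    then have "Qf L v = Qf L (P v + \<alpha> v *\<^sub>R u)" by simp
    also have "\<dots> = Qf L (P v) + m2 * (\<alpha> v)\<^sup>2" unfolding sh pP by simp
    finally show ?thesis .
  qed
  have pv: "p \<bullet> v = m2 * \<alpha> v" for v using m2 by (simp add: \<alpha>_def)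
  have Edec: "ennreal (exp (- Qf L v / 2)) = ennreal (exp (- (m2 * (\<alpha> v)\<^sup>2) / 2)) * g v" for v
  proof -
    have "- Qf L v / 2 = - (m2 * (\<alpha> v)\<^sup>2) / 2 + - Qf L (P v) / 2"
      using Qdec[of v] by simp
    then have "exp (- Qf L v / 2) = exp (- (m2 * (\<alpha> v)\<^sup>2) / 2) * exp (- Qf L (P v) / 2)"
      by (simp add: exp_add[symmetric])
    then show ?thesis unfolding g_def by (simp add: ennreal_mult)
  qed
  have [measurable]: "\<alpha> \<in> borel_measurable borel" unfolding \<alpha>_def by measurable
  have [measurable]: "P \<in> borel_measurable borel" unfolding P_def by measurable
  have [measurable]: "g \<in> borel_measurable borel" unfolding g_def by measurable
  have mG: "(\<lambda>a. F (m2 * a) * ennreal (exp (- (m2 * a\<^sup>2) / 2))) \<in> borel_measurable borel" by measurable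
  have mk: "(\<lambda>a. ennreal (exp (- (m2 * a\<^sup>2) / 2))) \<in> borel_measurable borel" by measurable
  have ma: "\<alpha> \<in> borel_measurable borel" by measurable
  have mg: "g \<in> borel_measurable borel" by measurable
  have GCi: "(\<integral>\<^sup>+v. (F (m2 * \<alpha> v) * ennreal (exp (- (m2 * (\<alpha> v)\<^sup>2) / 2))) * g v \<partial>lborel)
        * (\<integral>\<^sup>+s. ennreal (exp (- (m2 * s\<^sup>2) / 2)) \<partial>lborel)
       = (\<integral>\<^sup>+s. F (m2 * s) * ennreal (exp (- (m2 * s\<^sup>2) / 2)) \<partial>lborel)
        * (\<integral>\<^sup>+v. ennreal (exp (- (m2 * (\<alpha> v)\<^sup>2) / 2)) * g v \<partial>lborel)"
    by (rule GC[OF ma mg mG mk \<alpha>u gu])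
  have e1: "(\<integral>\<^sup>+v. (F (m2 * \<alpha> v) * ennreal (exp (- (m2 * (\<alpha> v)\<^sup>2) / 2))) * g v \<partial>lborel)
          = (\<integral>\<^sup>+v. F (p \<bullet> v) * ennreal (exp (- Qf L v / 2)) \<partial>lborel)"
    by (rule nn_integral_cong) (simp only: Edec pv mult.assoc)
  have e2: "(\<integral>\<^sup>+v. ennreal (exp (- (m2 * (\<alpha> v)\<^sup>2) / 2)) * g v \<partial>lborel)
          = (\<integral>\<^sup>+v. ennreal (exp (- Qf L v / 2)) \<partial>lborel)"
    by (rule nn_integral_cong) (simp only: Edec)
  show ?thesis using GCi unfolding e1 e2 .
qed

lemma Qf_scale: "Qf L (c *\<^sub>R w) = c\<^sup>2 * Qf L w"
  by (simp add: Qf_def matrix_vector_mult_scaleR power2_eq_square)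

lemma pdm_Qf_pos:
  assumes "pdm L" "v \<noteq> 0"
  shows "Qf L v > 0"
proof -
  obtain e where e: "e > 0" "\<And>v. e * (norm v)\<^sup>2 \<le> Qf L v" using assms unfolding pdm_def by auto
  have "0 < e * (norm v)\<^sup>2" using e(1) assms(2) by simp
  then show ?thesis using e(2)[of v] by linarith
qed

lemma Qf_nonneg:
  assumes "pdm L"
  shows "Qf L v \<ge> 0"
  using pdm_Qf_pos[OF assms, of v] by (cases "v = 0") (auto simp: Qf_def)

lemma scaling_identity:
  fixes L :: "real^'d^'d" and h :: "real^'d \<Rightarrow> ennreal"
  assumes L: "pdm L" and [measurable]: "h \<in> borel_measurable borel"
    and hom: "\<And>c w. c > 0 \<Longrightarrow> h (c *\<^sub>R w) = h w"
  shows "(\<integral>\<^sup>+v. h v * ennreal (Qf L v) * ennreal (exp (- Qf L v / 2)) \<partial>lborel)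
       = of_nat CARD('d) * (\<integral>\<^sup>+v. h v * ennreal (exp (- Qf L v / 2)) \<partial>lborel)"
proof -
  define d where "d = CARD('d)"
  have d1: "d \<ge> 1" unfolding d_def by (simp add: Suc_leI)
  define \<Psi> where "\<Psi> = (\<integral>\<^sup>+v. h v * ennreal (Qf L v) * ennreal (exp (- Qf L v / 2)) \<partial>lborel)"
  define k where "k v s = h v * ennreal (s * Qf L v * exp (- (s\<^sup>2 * Qf L v) / 2)) * indicator {1..} s" for v s
  have km[measurable]: "(\<lambda>(v, s). k v s) \<in> borel_measurable (lborel \<Otimes>\<^sub>M lborel)"
    unfolding k_def by measurable
  have "(\<integral>\<^sup>+v. h v * ennreal (exp (- Qf L v / 2)) \<partial>lborel) = (\<integral>\<^sup>+v. (\<integral>\<^sup>+s. k v s \<partial>lborel) \<partial>lborel)"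
  proof (rule nn_integral_cong_AE)
    show "AE v in lborel. h v * ennreal (exp (- Qf L v / 2)) = (\<integral>\<^sup>+s. k v s \<partial>lborel)"
      using AE_lborel_singleton[of 0]
    proof eventually_elim
      case (elim v)
      have q: "Qf L v > 0" using pdm_Qf_pos[OF L elim] .
      have "(\<integral>\<^sup>+s. k v s \<partial>lborel) = h v * (\<integral>\<^sup>+s. ennreal (s * Qf L v * exp (- (s\<^sup>2 * Qf L v) / 2)) * indicator {1..} s \<partial>lborel)"
        unfolding k_def by (subst nn_integral_cmult[symmetric]) (auto simp: mult.assoc)
      also have "\<dots> = h v * ennreal (exp (- Qf L v / 2))"
        using FTC_gauss_tail[OF q] by simp
      finally show ?case by simp
    qed
  qed
  also have "\<dots> = (\<integral>\<^sup>+s. (\<integral>\<^sup>+v. k v s \<partial>lborel) \<partial>lborel)"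
    by (rule lborel_pair.Fubini'[symmetric]) (rule km)
  also have "\<dots> = (\<integral>\<^sup>+s. ennreal (1 / s ^ Suc d) * indicator {1..} s * \<Psi> \<partial>lborel)"
  proof (rule nn_integral_cong)
    fix s :: real
    show "(\<integral>\<^sup>+v. k v s \<partial>lborel) = ennreal (1 / s ^ Suc d) * indicator {1..} s * \<Psi>"
    proof (cases "s \<ge> 1")
      case False
      then show ?thesis by (simp add: k_def)
    next
      case True
      then have s: "s > 0" by simp
      have "(\<integral>\<^sup>+v. k v s \<partial>lborel) = ennreal (\<bar>1/s\<bar> ^ DIM(real^'d)) * (\<integral>\<^sup>+v. k ((1/s) *\<^sub>R v) s \<partial>lborel)"
        by (rule nn_scale) (use s in auto)
      also have "(\<lambda>v. k ((1/s) *\<^sub>R v) s) = (\<lambda>v. ennreal (1 / s) * (h v * ennreal (Qf L v) * ennreal (exp (- Qf L v / 2))))"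
      proof
        fix v
        have "k ((1/s) *\<^sub>R v) s = h v * ennreal (s * ((1/s)\<^sup>2 * Qf L v) * exp (- (s\<^sup>2 * ((1/s)\<^sup>2 * Qf L v)) / 2))"
          using True s by (simp add: k_def Qf_scale hom)
        also have "s * ((1/s)\<^sup>2 * Qf L v) = (1 / s) * Qf L v" using s by (simp add: power2_eq_square)
        also have "s\<^sup>2 * ((1/s)\<^sup>2 * Qf L v) = Qf L v" using s by (simp add: power2_eq_square)
        finally show "k ((1/s) *\<^sub>R v) s = ennreal (1 / s) * (h v * ennreal (Qf L v) * ennreal (exp (- Qf L v / 2)))"
          using s Qf_nonneg[OF L, of v] by (simp add: ennreal_mult[symmetric] field_simps)
      qed
      also have "(\<integral>\<^sup>+v. ennreal (1 / s) * (h v * ennreal (Qf L v) * ennreal (exp (- Qf L v / 2))) \<partial>lborel) = ennreal (1/s) * \<Psi>"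
        unfolding \<Psi>_def by (rule nn_integral_cmult) measurable
      finally have X: "(\<integral>\<^sup>+v. k v s \<partial>lborel) = ennreal (\<bar>1/s\<bar> ^ DIM(real^'d)) * (ennreal (1/s) * \<Psi>)" .
      have r: "\<bar>1/s\<bar> ^ DIM(real^'d) * (1/s) = 1 / s ^ Suc d"
        using s by (simp add: d_def power_one_over)
      have "ennreal (\<bar>1/s\<bar> ^ DIM(real^'d)) * (ennreal (1/s) * \<Psi>) = ennreal (\<bar>1/s\<bar> ^ DIM(real^'d) * (1/s)) * \<Psi>"
        using s by (subst ennreal_mult) (auto simp: mult.assoc)
      then show ?thesis using X True unfolding r by simp
    qed
  qed
  also have "\<dots> = (\<integral>\<^sup>+s. ennreal (1 / s ^ Suc d) * indicator {1..} s \<partial>lborel) * \<Psi>"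
    by (rule nn_integral_multc) measurable
  also have "\<dots> = ennreal (1 / real d) * \<Psi>" using FTC_inv_pow[OF d1] by simp
  finally have eq: "(\<integral>\<^sup>+v. h v * ennreal (exp (- Qf L v / 2)) \<partial>lborel) = ennreal (1 / real d) * \<Psi>" .
  have "of_nat d * (ennreal (1 / real d) * \<Psi>) = \<Psi>"
    using d1 by (simp add: mult.assoc[symmetric] ennreal_of_nat_eq_real_of_nat ennreal_mult[symmetric])
  then show ?thesis unfolding eq \<Psi>_def d_def by simp
qed

definition Zf :: "real^'d^'d \<Rightarrow> ennreal" where
  "Zf M = (\<integral>\<^sup>+v. ennreal (exp (- Qf M v / 2)) \<partial>lborel)"

lemma outer_zero: "outer 0 = 0"
  by (simp add: outer_def vec_eq_iff)

lemma Zf_update: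
  fixes L :: "real^'d^'d" and p :: "real^'d"
  assumes L: "pdm L" and c: "c \<ge> 0"
  defines "m2 \<equiv> p \<bullet> (matrix_inv L *v p)"
  shows "Zf (L + c *\<^sub>R outer p) * ennreal (sqrt (1 + c * m2)) = Zf L"
proof (cases "p = 0")
  case True
  then show ?thesis by (simp add: m2_def outer_zero)
next
  case False
  have m2: "m2 > 0" unfolding m2_def using m2_pos[OF L False] .
  define F where "F x = ennreal (exp (- (c * x\<^sup>2) / 2))" for x :: real
  have Fm[measurable]: "F \<in> borel_measurable borel" unfolding F_def by measurable
  note LL = line_lemma[OF L False Fm]
  have e1: "(\<integral>\<^sup>+v. F (p \<bullet> v) * ennreal (exp (- Qf L v / 2)) \<partial>lborel) = Zf (L + c *\<^sub>R outer p)"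
    unfolding Zf_def
  proof (rule nn_integral_cong)
    fix v
    have "exp (- Qf (L + c *\<^sub>R outer p) v / 2) = exp (- (c * (p \<bullet> v)\<^sup>2) / 2) * exp (- Qf L v / 2)"
      unfolding Qf_update exp_add[symmetric] by (simp add: field_simps)
    then show "F (p \<bullet> v) * ennreal (exp (- Qf L v / 2)) = ennreal (exp (- Qf (L + c *\<^sub>R outer p) v / 2))"
      by (simp add: F_def ennreal_mult)
  qed
  have k1: "(\<integral>\<^sup>+a. ennreal (exp (- (m2 * a\<^sup>2) / 2)) \<partial>lborel) = ennreal (sqrt (2 * pi / m2))"
    by (rule gauss_1d[OF m2])
  have bpos: "m2 * (1 + c * m2) > 0" using m2 c by (simp add: add_pos_nonneg)
  have kF: "(\<integral>\<^sup>+a. F (m2 * a) * ennreal (exp (- (m2 * a\<^sup>2) / 2)) \<partial>lborel) = ennreal (sqrt (2 * pi / (m2 * (1 + c * m2))))"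
  proof -
    have "(\<integral>\<^sup>+a. F (m2 * a) * ennreal (exp (- (m2 * a\<^sup>2) / 2)) \<partial>lborel)
        = (\<integral>\<^sup>+a. ennreal (exp (- ((m2 * (1 + c * m2)) * a\<^sup>2) / 2)) \<partial>lborel)"
    proof (rule nn_integral_cong)
      fix a
      have "exp (- (c * (m2 * a)\<^sup>2) / 2) * exp (- (m2 * a\<^sup>2) / 2) = exp (- ((m2 * (1 + c * m2)) * a\<^sup>2) / 2)"
        unfolding exp_add[symmetric] by (simp add: field_simps power2_eq_square)
      then show "F (m2 * a) * ennreal (exp (- (m2 * a\<^sup>2) / 2)) = ennreal (exp (- ((m2 * (1 + c * m2)) * a\<^sup>2) / 2))"
        by (simp add: F_def ennreal_mult[symmetric])
    qed
    also have "\<dots> = ennreal (sqrt (2 * pi / (m2 * (1 + c * m2))))" by (rule gauss_1d[OF bpos])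
    finally show ?thesis .
  qed
  have main: "Zf (L + c *\<^sub>R outer p) * ennreal (sqrt (2 * pi / m2)) = ennreal (sqrt (2 * pi / (m2 * (1 + c * m2)))) * Zf L"
    using LL[folded m2_def] unfolding e1 k1 kF by (simp add: Zf_def)
  define k where "k = sqrt (2 * pi / m2)"
  define r where "r = sqrt (1 + c * m2)"
  have kpos: "k > 0" unfolding k_def using m2 by simp
  have rpos: "r > 0" unfolding r_def using m2 c by (simp add: add_pos_nonneg)
  have kr: "sqrt (2 * pi / (m2 * (1 + c * m2))) = k / r"
    unfolding k_def r_def by (simp add: real_sqrt_divide real_sqrt_mult divide_divide_eq_left)
  have main2: "Zf (L + c *\<^sub>R outer p) * ennreal k = ennreal (k / r) * Zf L"
    using main unfolding kr k_def .
  have "Zf (L + c *\<^sub>R outer p) * ennreal r = Zf (L + c *\<^sub>R outer p) * ennreal k * ennreal (r / k)"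
    using kpos rpos by (simp add: mult.assoc ennreal_mult[symmetric])
  also have "\<dots> = ennreal (k / r) * ennreal (r / k) * Zf L" unfolding main2 by (simp add: mult_ac)
  also have "ennreal (k / r) * ennreal (r / k) = 1"
    using kpos rpos by (simp add: ennreal_mult[symmetric])
  finally show ?thesis unfolding r_def by simp
qed


lemma Zf_base:
  assumes lam: "lam > 0"
  shows "Zf (lam *\<^sub>R mat 1 :: real^'d^'d) = ennreal (sqrt (2 * pi / lam) ^ CARD('d))"
proof -
  define f where "f (b::real^'d) t = ennreal (exp (- (lam * t\<^sup>2) / 2))" for b t
  have eq: "ennreal (exp (- Qf (lam *\<^sub>R mat 1 :: real^'d^'d) v / 2)) = (\<Prod>b\<in>Basis. f b (v \<bullet> b))" for v :: "real^'d"
  proof -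
    have "Qf (lam *\<^sub>R mat 1 :: real^'d^'d) v = lam * (v \<bullet> v)"
      by (simp add: Qf_def scaleR_mulv)
    also have "v \<bullet> v = (\<Sum>b\<in>Basis. (v \<bullet> b)\<^sup>2)"
      by (subst euclidean_inner) (simp add: power2_eq_square)
    finally have "- Qf (lam *\<^sub>R mat 1 :: real^'d^'d) v / 2 = (\<Sum>b\<in>Basis. - (lam * (v \<bullet> b)\<^sup>2) / 2)"
      by (simp add: sum_distrib_left sum_divide_distrib[symmetric] sum_negf)
    then have "exp (- Qf (lam *\<^sub>R mat 1 :: real^'d^'d) v / 2) = (\<Prod>b\<in>Basis. exp (- (lam * (v \<bullet> b)\<^sup>2) / 2))"
      by (simp add: exp_sum)
    then show ?thesis unfolding f_def by (simp add: prod_ennreal)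
  qed
  have "Zf (lam *\<^sub>R mat 1 :: real^'d^'d) = (\<integral>\<^sup>+v. (\<Prod>b\<in>Basis. f b (v \<bullet> b)) \<partial>lborel)"
    unfolding Zf_def eq ..
  also have "\<dots> = (\<Prod>b\<in>(Basis::(real^'d) set). (\<integral>\<^sup>+t. f b t \<partial>lborel))"
    by (rule nn_integral_lborel_prod) (auto simp: f_def)
  also have "\<dots> = (\<Prod>b\<in>(Basis::(real^'d) set). ennreal (sqrt (2 * pi / lam)))"
    unfolding f_def using gauss_1d[OF lam] by simp
  also have "\<dots> = ennreal (sqrt (2 * pi / lam) ^ CARD('d))"
    using lam by (simp add: ennreal_power[symmetric])
  finally show ?thesis .
qed

definition good :: "real^'d^'d \<Rightarrow> bool" where
  "good L \<longleftrightarrow> pdm L \<and> det L > 0 \<and> Zf L * ennreal (sqrt (det L)) = ennreal (sqrt (2 * pi) ^ CARD('d))"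

lemma good_base:
  assumes lam: "lam > 0"
  shows "good (lam *\<^sub>R mat 1 :: real^'d^'d)"
proof -
  have Q: "Qf (lam *\<^sub>R mat 1 :: real^'d^'d) v = lam * (norm v)\<^sup>2" for v
    by (simp add: Qf_def scaleR_mulv power2_norm_eq_inner)
  have tr: "transpose (lam *\<^sub>R mat 1 :: real^'d^'d) = lam *\<^sub>R mat 1"
    by (simp add: transpose_scalar)
  have pd: "pdm (lam *\<^sub>R mat 1 :: real^'d^'d)"
    unfolding pdm_def using lam tr Q by auto
  have det: "det (lam *\<^sub>R mat 1 :: real^'d^'d) = lam ^ CARD('d)"
    by (subst det_diagonal) (auto simp: mat_def)
  have s1: "sqrt (2 * pi / lam) * sqrt lam = sqrt (2 * pi)"
    using lam by (simp add: real_sqrt_mult[symmetric])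
  have s2: "sqrt (2 * pi / lam) ^ CARD('d) * sqrt (lam ^ CARD('d)) = sqrt (2 * pi) ^ CARD('d)"
    unfolding real_sqrt_power power_mult_distrib[symmetric] s1 ..
  have "Zf (lam *\<^sub>R mat 1 :: real^'d^'d) * ennreal (sqrt (det (lam *\<^sub>R mat 1 :: real^'d^'d)))
      = ennreal (sqrt (2 * pi / lam) ^ CARD('d) * sqrt (lam ^ CARD('d)))"
    unfolding Zf_base[OF lam] det using lam by (subst ennreal_mult) auto
  then have "Zf (lam *\<^sub>R mat 1 :: real^'d^'d) * ennreal (sqrt (det (lam *\<^sub>R mat 1 :: real^'d^'d)))
      = ennreal (sqrt (2 * pi) ^ CARD('d))" unfolding s2 .
  then show ?thesis using pd det lam unfolding good_def by simp
qed

lemma good_update: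
  fixes L :: "real^'d^'d"
  assumes g: "good L" and c: "c \<ge> 0"
  shows "good (L + c *\<^sub>R outer p)"
proof -
  define m2 where "m2 = p \<bullet> (matrix_inv L *v p)"
  have L: "pdm L" "det L > 0" and Z: "Zf L * ennreal (sqrt (det L)) = ennreal (sqrt (2 * pi) ^ CARD('d))"
    using g unfolding good_def by auto
  have m2: "m2 \<ge> 0"
    using m2_pos[OF L(1), of p] by (cases "p = 0") (auto simp: m2_def less_imp_le)
  have r: "1 + c * m2 > 0" using m2 c by (simp add: add_pos_nonneg)
  have det: "det (L + c *\<^sub>R outer p) = det L * (1 + c * m2)"
    unfolding m2_def by (rule det_update[OF L(1)])
  have dpos: "det (L + c *\<^sub>R outer p) > 0" unfolding det using L(2) r by simp
  have U: "Zf (L + c *\<^sub>R outer p) * ennreal (sqrt (1 + c * m2)) = Zf L"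
    unfolding m2_def by (rule Zf_update[OF L(1) c])
  have "Zf (L + c *\<^sub>R outer p) * ennreal (sqrt (det (L + c *\<^sub>R outer p)))
      = Zf (L + c *\<^sub>R outer p) * ennreal (sqrt (1 + c * m2)) * ennreal (sqrt (det L))"
  proof -
    have "ennreal (sqrt (det L * (1 + c * m2))) = ennreal (sqrt (det L)) * ennreal (sqrt (1 + c * m2))"
      unfolding real_sqrt_mult using L(2) r by (subst ennreal_mult) auto
    then show ?thesis unfolding det by (simp add: ac_simps)
  qed
  also have "\<dots> = ennreal (sqrt (2 * pi) ^ CARD('d))" unfolding U Z ..
  finally show ?thesis using pdm_update[OF L(1) c] dpos unfolding good_def by simp
qed

lemma mu_pos: "0 < mu y" and mu_lt1: "mu y < 1"
  unfolding mu_def by (auto simp: divide_less_eq add_pos_pos)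

lemma mudot_nonneg: "0 \<le> mudot y"
  unfolding mudot_def using mu_pos[of y] mu_lt1[of y] by simp

lemma mudot_le: "mudot y \<le> 1 / 4"
proof -
  have "0 \<le> (mu y - 1/2)\<^sup>2" by simp
  then show ?thesis unfolding mudot_def by (simp add: power2_eq_square algebra_simps)
qed

lemma one_plus_exp_ne: "1 + exp y \<noteq> (0::real)"
proof -
  have "0 < 1 + exp y" by (simp add: add_pos_pos)
  then show ?thesis by simp
qed

lemma loss_cont: "continuous_on UNIV (loss lam phi s a x t)"
proof -
  have c1: "continuous_on UNIV (\<lambda>\<theta>. ln (mu (v \<bullet> \<theta>)))" for v :: "real^'d"
    unfolding mu_def by (intro continuous_intros) (auto simp: one_plus_exp_ne)
  have c2: "continuous_on UNIV (\<lambda>\<theta>. ln (1 - mu (v \<bullet> \<theta>)))" for v :: "real^'d"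
  proof -
    have "1 - mu y = exp (- y) / (1 + exp (- y))" for y
    proof -
      have "1 + exp (- y) \<noteq> 0" by (rule one_plus_exp_ne)
      then show ?thesis unfolding mu_def by (simp add: field_simps)
    qed
    then show ?thesis
      by (simp only:) (intro continuous_intros, auto simp: one_plus_exp_ne)
  qed
  show ?thesis
    unfolding loss_def[abs_def]
    by (intro continuous_intros c1 c2)
qed

lemma theta_bar_prop:
  assumes S: "S \<ge> 0"
  shows "theta_bar lam S phi s a x t \<in> cball 0 S \<and>
         (\<forall>\<theta>'\<in>cball 0 S. loss lam phi s a x t (theta_bar lam S phi s a x t) \<le> loss lam phi s a x t \<theta>')"
proof -
  have "\<exists>\<theta>\<in>cball 0 S. \<forall>\<theta>'\<in>cball 0 S. loss lam phi s a x t \<theta> \<le> loss lam phi s a x t \<theta>'"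
    using S by (intro continuous_attains_inf compact_cball continuous_on_subset[OF loss_cont]) auto
  then have "\<exists>\<theta>. \<theta> \<in> cball 0 S \<and> (\<forall>\<theta>'\<in>cball 0 S. loss lam phi s a x t \<theta> \<le> loss lam phi s a x t \<theta>')"
    by blast
  then show ?thesis unfolding theta_bar_def by (rule someI_ex)
qed

lemma theta_bar_in_Ebar:
  assumes S: "S \<ge> 0"
  shows "theta_bar lam S phi s a x t \<in> Ebar lam S beta phi s a x t"
  using theta_bar_prop[OF S, of lam phi s a x t]
  by (simp add: Ebar_def Eset_def)

lemma Lmat_good:
  assumes lam: "lam > 0" and S: "S \<ge> 0"
  shows "good (Lmat lam S beta phi s a x n)"
proof (induction n)
  case 0
  then show ?case using good_base[OF lam] by simp
next
  case (Suc n)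
  have "(INF \<theta>\<in>Ebar lam S beta phi s a x (Suc n). mudot (phi (s (Suc n)) (a (Suc n)) \<bullet> \<theta>)) \<ge> 0"
    using theta_bar_in_Ebar[OF S] by (intro cINF_greatest mudot_nonneg) blast
  then show ?case using good_update[OF Suc.IH] by simp
qed

definition gd :: "real^'d^'d \<Rightarrow> real^'d \<Rightarrow> real" where
  "gd L v = sqrt (det L) / (2 * pi) powr (real CARD('d) / 2) * exp (- Qf L v / 2)"

lemma gd_meas[measurable]: "gd L \<in> borel_measurable borel"
  unfolding gd_def by measurable

lemma gd_nonneg: "good L \<Longrightarrow> gd L v \<ge> 0"
  unfolding gd_def good_def by simp

lemma gaussian_prec_eq: "gaussian_prec L = density lborel (\<lambda>v. ennreal (gd L v))"
  unfolding gaussian_prec_def gd_def Qf_def ..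

lemma powr_sqrt_pow: "(2 * pi) powr (real n / 2) = sqrt (2 * pi) ^ n"
proof -
  have "(2 * pi) powr (real n / 2) = ((2 * pi) powr (1/2)) powr real n"
    by (simp add: powr_powr)
  also have "\<dots> = sqrt (2 * pi) ^ n"
    by (simp add: powr_half_sqrt powr_realpow)
  finally show ?thesis .
qed

lemma gd_integral:
  fixes L :: "real^'d^'d"
  assumes "good L"
  shows "(\<integral>\<^sup>+v. ennreal (gd L v) \<partial>lborel) = 1"
proof -
  define K where "K = sqrt (2 * pi) ^ CARD('d)"
  have K: "K > 0" unfolding K_def by simp
  have dp: "det L > 0" and Z: "Zf L * ennreal (sqrt (det L)) = ennreal K"
    using assms unfolding good_def K_def by auto
  have "(\<integral>\<^sup>+v. ennreal (gd L v) \<partial>lborel) = (\<integral>\<^sup>+v. ennreal (sqrt (det L) / K) * ennreal (exp (- Qf L v / 2)) \<partial>lborel)"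
    unfolding gd_def powr_sqrt_pow K_def[symmetric] using dp K
    by (intro nn_integral_cong) (simp add: ennreal_mult[symmetric])
  also have "\<dots> = ennreal (sqrt (det L) / K) * Zf L"
    unfolding Zf_def by (rule nn_integral_cmult) measurable
  also have "\<dots> = ennreal (1 / K) * (Zf L * ennreal (sqrt (det L)))"
    using dp K by (simp add: ennreal_mult[symmetric] ac_simps)
  also have "\<dots> = 1" unfolding Z using K by (simp add: ennreal_mult[symmetric])
  finally show ?thesis .
qed

lemma gauss_prob:
  assumes "good L"
  shows "prob_space (gaussian_prec L)"
  by (rule prob_spaceI) (simp add: gaussian_prec_eq emeasure_density gd_integral[OF assms])

lemma gauss_nn:
  assumes [measurable]: "f \<in> borel_measurable borel"
  shows "(\<integral>\<^sup>+v. f v \<partial>gaussian_prec L) = (\<integral>\<^sup>+v. ennreal (gd L v) * f v \<partial>lborel)"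
  unfolding gaussian_prec_eq by (rule nn_integral_density) measurable

definition gc :: "real^'d^'d \<Rightarrow> real" where
  "gc L = sqrt (det L) / (2 * pi) powr (real CARD('d) / 2)"

lemma gd_split: "ennreal (gd L v) = ennreal (gc L) * ennreal (exp (- Qf L v / 2))"
  unfolding gd_def gc_def by (rule ennreal_mult'') simp

lemma gc_Zf:
  fixes L :: "real^'d^'d"
  assumes "good L"
  shows "ennreal (gc L) * Zf L = 1"
proof -
  have "(\<integral>\<^sup>+v. ennreal (gd L v) \<partial>lborel) = ennreal (gc L) * Zf L"
    unfolding gd_split Zf_def by (rule nn_integral_cmult) measurable
  then show ?thesis using gd_integral[OF assms] by simp
qed

lemma gauss_nn_split:
  fixes L :: "real^'d^'d"
  assumes [measurable]: "f \<in> borel_measurable borel"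
  shows "(\<integral>\<^sup>+v. f v \<partial>gaussian_prec L) = ennreal (gc L) * (\<integral>\<^sup>+v. f v * ennreal (exp (- Qf L v / 2)) \<partial>lborel)"
proof -
  have "(\<integral>\<^sup>+v. f v \<partial>gaussian_prec L) = (\<integral>\<^sup>+v. ennreal (gc L) * (f v * ennreal (exp (- Qf L v / 2))) \<partial>lborel)"
    unfolding gauss_nn[OF assms] gd_split by (simp add: ac_simps)
  also have "\<dots> = ennreal (gc L) * (\<integral>\<^sup>+v. f v * ennreal (exp (- Qf L v / 2)) \<partial>lborel)"
    by (rule nn_integral_cmult) measurable
  finally show ?thesis .
qed

lemma F1:
  fixes L :: "real^'d^'d"
  assumes g: "good L" and p: "p \<noteq> 0"
  defines "m2 \<equiv> p \<bullet> (matrix_inv L *v p)"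
  shows "(\<integral>\<^sup>+v. ennreal \<bar>p \<bullet> v\<bar> \<partial>gaussian_prec L) = ennreal (2 / sqrt (2 * pi / m2))"
proof -
  have L: "pdm L" using g unfolding good_def by auto
  have m2: "m2 > 0" unfolding m2_def using m2_pos[OF L p] .
  define F where "F x = ennreal \<bar>x\<bar>" for x :: real
  have Fm[measurable]: "F \<in> borel_measurable borel" unfolding F_def by measurable
  note LL = line_lemma[OF L p Fm, folded m2_def]
  define I where "I = (\<integral>\<^sup>+v. F (p \<bullet> v) * ennreal (exp (- Qf L v / 2)) \<partial>lborel)"
  have kF: "(\<integral>\<^sup>+a. F (m2 * a) * ennreal (exp (- (m2 * a\<^sup>2) / 2)) \<partial>lborel) = 2"
  proof -
    have "(\<integral>\<^sup>+a. F (m2 * a) * ennreal (exp (- (m2 * a\<^sup>2) / 2)) \<partial>lborel)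
        = (\<integral>\<^sup>+a. ennreal m2 * ennreal (\<bar>a\<bar> * exp (- (m2 * a\<^sup>2) / 2)) \<partial>lborel)"
      using m2 by (intro nn_integral_cong) (simp add: F_def abs_mult ennreal_mult[symmetric] mult.assoc)
    also have "\<dots> = ennreal m2 * (\<integral>\<^sup>+a. ennreal (\<bar>a\<bar> * exp (- (m2 * a\<^sup>2) / 2)) \<partial>lborel)"
      by (rule nn_integral_cmult) measurable
    also have "\<dots> = ennreal m2 * ennreal (2 / m2)" unfolding abs_gauss_1d[OF m2] ..
    also have "\<dots> = 2" using m2 by (simp add: ennreal_mult[symmetric])
    finally show ?thesis .
  qed
  define k1 where "k1 = sqrt (2 * pi / m2)"
  have k1: "k1 > 0" unfolding k1_def using m2 by simp
  have main: "I * ennreal k1 = 2 * Zf L"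
    using LL unfolding gauss_1d[OF m2] kF I_def k1_def Zf_def .
  have B: "(\<integral>\<^sup>+v. ennreal \<bar>p \<bullet> v\<bar> \<partial>gaussian_prec L) = ennreal (gc L) * I"
    unfolding I_def F_def by (rule gauss_nn_split) measurable
  have "ennreal (gc L) * I = ennreal (gc L) * I * ennreal k1 * ennreal (1 / k1)"
    using k1 by (simp add: mult.assoc ennreal_mult[symmetric])
  also have "\<dots> = 2 * (ennreal (gc L) * Zf L) * ennreal (1 / k1)"
    by (simp add: mult.assoc main) (simp add: ac_simps)
  also have "\<dots> = 2 * ennreal (1 / k1)" using gc_Zf[OF g] by simp
  also have "\<dots> = ennreal (2 / k1)"
  proof -
    have "ennreal (2 / k1) = ennreal 2 * ennreal (1 / k1)" using k1 by (subst ennreal_mult[symmetric]) auto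
    then show ?thesis by simp
  qed
  finally show ?thesis unfolding B k1_def .
qed

lemma F2G:
  fixes L :: "real^'d^'d" and h :: "real^'d \<Rightarrow> ennreal"
  assumes g: "good L" and [measurable]: "h \<in> borel_measurable borel"
    and hom: "\<And>c w. c > 0 \<Longrightarrow> h (c *\<^sub>R w) = h w"
  shows "(\<integral>\<^sup>+v. h v * ennreal (Qf L v) \<partial>gaussian_prec L) = of_nat CARD('d) * (\<integral>\<^sup>+v. h v \<partial>gaussian_prec L)"
proof -
  have L: "pdm L" using g unfolding good_def by auto
  have "(\<integral>\<^sup>+v. h v * ennreal (Qf L v) \<partial>gaussian_prec L)
      = ennreal (gc L) * (\<integral>\<^sup>+v. h v * ennreal (Qf L v) * ennreal (exp (- Qf L v / 2)) \<partial>lborel)"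
    by (rule gauss_nn_split) measurable
  also have "\<dots> = ennreal (gc L) * (of_nat CARD('d) * (\<integral>\<^sup>+v. h v * ennreal (exp (- Qf L v / 2)) \<partial>lborel))"
    using scaling_identity[OF L assms(2) hom] by simp
  also have "\<dots> = of_nat CARD('d) * (ennreal (gc L) * (\<integral>\<^sup>+v. h v * ennreal (exp (- Qf L v / 2)) \<partial>lborel))"
    by (simp add: ac_simps)
  also have "ennreal (gc L) * (\<integral>\<^sup>+v. h v * ennreal (exp (- Qf L v / 2)) \<partial>lborel) = (\<integral>\<^sup>+v. h v \<partial>gaussian_prec L)"
    by (rule gauss_nn_split[symmetric]) measurable
  finally show ?thesis .
qed

lemma Qf_zero_iff:
  assumes "pdm L" "Qf L v = 0"
  shows "v = 0"
  using pdm_Qf_pos[OF assms(1), of v] assms(2) by (cases "v = 0") auto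

lemma ennreal_mult_assoc':
  assumes "0 \<le> x" "0 \<le> y"
  shows "ennreal x * (ennreal y * A) = ennreal (x * y) * A"
  using assms by (simp add: ennreal_mult mult.assoc)

lemma ennreal_mult3:
  assumes "0 \<le> w" "0 \<le> a" "0 \<le> b"
  shows "ennreal (w * (a * b)) = ennreal w * ennreal a * ennreal b"
  using assms by (simp add: ennreal_mult mult.assoc)

lemma core:
  fixes L :: "real^'d^'d" and p :: "real^'d" and gf :: "real^'d \<Rightarrow> real" and w :: real
  assumes g: "good L" and w: "w \<ge> 0" and [measurable]: "gf \<in> borel_measurable borel"
    and gnn: "\<And>v. gf v \<ge> 0" and gb: "\<And>v. w * \<bar>p \<bullet> v\<bar> \<le> gf v * sqrt (Qf L v)"
  shows "ennreal (w * inv_norm p L) \<le> ennreal (sqrt (pi * real CARD('d) / 2)) * (\<integral>\<^sup>+v. ennreal (gf v) \<partial>gaussian_prec L)"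
proof (cases "p = 0")
  case True
  then show ?thesis by (simp add: inv_norm_def)
next
  case False
  have L: "pdm L" using g unfolding good_def by auto
  define m2 where "m2 = p \<bullet> (matrix_inv L *v p)"
  have m2: "m2 > 0" unfolding m2_def using m2_pos[OF L False] .
  have inm: "inv_norm p L = sqrt m2" unfolding inv_norm_def m2_def ..
  define d where "d = CARD('d)"
  have d1: "d \<ge> 1" unfolding d_def by (simp add: Suc_leI)
  define h where "h v = \<bar>p \<bullet> v\<bar> / sqrt (Qf L v)" for v
  have hm[measurable]: "h \<in> borel_measurable borel" unfolding h_def by measurable
  have Qnn: "Qf L v \<ge> 0" for v by (rule Qf_nonneg[OF L])
  have hnn: "h v \<ge> 0" for v unfolding h_def using Qnn[of v] by simp
  have hom: "ennreal (h (c *\<^sub>R v)) = ennreal (h v)" if "c > 0" for c v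
  proof -
    have "sqrt (Qf L (c *\<^sub>R v)) = c * sqrt (Qf L v)"
      using that by (simp add: Qf_scale real_sqrt_mult)
    then show ?thesis using that by (simp add: h_def abs_mult)
  qed
  have hr: "h v * sqrt (Qf L v) = \<bar>p \<bullet> v\<bar>" for v
  proof (cases "Qf L v = 0")
    case True
    then have "v = 0" by (rule Qf_zero_iff[OF L])
    then show ?thesis by (simp add: h_def)
  next
    case False
    then have "sqrt (Qf L v) > 0" using Qnn[of v] by simp
    then show ?thesis by (simp add: h_def)
  qed
  define G where "G = gaussian_prec L"
  define A where "A = (\<integral>\<^sup>+v. ennreal (h v) \<partial>G)"
  define B where "B = (\<integral>\<^sup>+v. ennreal \<bar>p \<bullet> v\<bar> \<partial>G)"
  have sG: "sets G = sets borel" unfolding G_def gaussian_prec_eq by simp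
  have mG: "f \<in> borel_measurable G" if "f \<in> borel_measurable borel" for f :: "real^'d \<Rightarrow> ennreal"
    using that measurable_cong_sets[OF sG refl] by blast
  have mGr: "f \<in> borel_measurable G" if "f \<in> borel_measurable borel" for f :: "real^'d \<Rightarrow> real"
    using that measurable_cong_sets[OF sG refl] by blast
  have i: "ennreal w * A \<le> (\<integral>\<^sup>+v. ennreal (gf v) \<partial>G)"
  proof -
    have "ennreal w * A = (\<integral>\<^sup>+v. ennreal (w * h v) \<partial>G)"
      unfolding A_def using w hnn by (subst nn_integral_cmult[symmetric]) (auto intro!: mG mGr simp: ennreal_mult)
    also have "\<dots> \<le> (\<integral>\<^sup>+v. ennreal (gf v) \<partial>G)"
    proof (rule nn_integral_mono)
      fix v
      have "w * h v \<le> gf v"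
      proof (cases "Qf L v = 0")
        case True
        then show ?thesis using gnn[of v] by (simp add: h_def)
      next
        case False
        then have s: "sqrt (Qf L v) > 0" using Qnn[of v] by simp
        have "w * h v = (w * \<bar>p \<bullet> v\<bar>) / sqrt (Qf L v)" by (simp add: h_def)
        also have "\<dots> \<le> (gf v * sqrt (Qf L v)) / sqrt (Qf L v)"
          using gb[of v] s by (intro divide_right_mono) auto
        also have "\<dots> = gf v" using s by simp
        finally show ?thesis .
      qed
      then show "ennreal (w * h v) \<le> ennreal (gf v)" by (rule ennreal_leI)
    qed
    finally show ?thesis .
  qed
  have ii: "(\<integral>\<^sup>+v. ennreal (h v) * ennreal (Qf L v) \<partial>G) = of_nat d * A"
    unfolding G_def A_def d_def by (rule F2G[OF g]) (auto simp: hom)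
  have iii: "ennreal (2 * sqrt d) * B \<le> of_nat d * A + of_nat d * A"
  proof -
    have pt: "ennreal (2 * sqrt d * \<bar>p \<bullet> v\<bar>) \<le> ennreal (h v) * ennreal (Qf L v) + of_nat d * ennreal (h v)" for v
    proof -
      have "0 \<le> h v * (sqrt (Qf L v) - sqrt d)\<^sup>2" using hnn by simp
      also have "h v * (sqrt (Qf L v) - sqrt d)\<^sup>2 = h v * Qf L v + d * h v - 2 * sqrt d * (h v * sqrt (Qf L v))"
        using Qnn[of v] by (simp add: power2_eq_square algebra_simps)
      finally have "2 * sqrt d * \<bar>p \<bullet> v\<bar> \<le> h v * Qf L v + d * h v" unfolding hr by simp
      then have "ennreal (2 * sqrt d * \<bar>p \<bullet> v\<bar>) \<le> ennreal (h v * Qf L v + d * h v)" by (rule ennreal_leI)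
      also have "\<dots> = ennreal (h v) * ennreal (Qf L v) + of_nat d * ennreal (h v)"
        using hnn[of v] Qnn[of v] by (simp add: ennreal_plus ennreal_mult ennreal_of_nat_eq_real_of_nat)
      finally show ?thesis .
    qed
    have "ennreal (2 * sqrt d) * B = (\<integral>\<^sup>+v. ennreal (2 * sqrt d * \<bar>p \<bullet> v\<bar>) \<partial>G)"
      unfolding B_def by (subst nn_integral_cmult[symmetric]) (auto intro!: mG mGr simp: ennreal_mult)
    also have "\<dots> \<le> (\<integral>\<^sup>+v. ennreal (h v) * ennreal (Qf L v) + of_nat d * ennreal (h v) \<partial>G)"
      by (rule nn_integral_mono) (rule pt)
    also have "\<dots> = (\<integral>\<^sup>+v. ennreal (h v) * ennreal (Qf L v) \<partial>G) + (\<integral>\<^sup>+v. of_nat d * ennreal (h v) \<partial>G)"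
      by (rule nn_integral_add) (auto intro!: mG)
    also have "(\<integral>\<^sup>+v. of_nat d * ennreal (h v) \<partial>G) = of_nat d * A"
      unfolding A_def by (rule nn_integral_cmult) (auto intro!: mG)
    finally show ?thesis unfolding ii .
  qed
  have iv: "B \<le> ennreal (sqrt d) * A"
  proof -
    have sd: "sqrt d > 0" using d1 by simp
    have "B = ennreal (1 / (2 * sqrt d)) * (ennreal (2 * sqrt d) * B)"
      using sd by (simp add: mult.assoc[symmetric] ennreal_mult[symmetric])
    also have "\<dots> \<le> ennreal (1 / (2 * sqrt d)) * (of_nat d * A + of_nat d * A)"
      by (rule mult_left_mono[OF iii]) simp
    also have "of_nat d * A + of_nat d * A = ennreal (2 * d) * A"
    proof -
      have "ennreal (2 * d) = 2 * of_nat d"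
        by (simp add: ennreal_mult ennreal_of_nat_eq_real_of_nat)
      then show ?thesis by (simp add: mult_2[symmetric] mult.assoc)
    qed
    also have "ennreal (1 / (2 * sqrt d)) * (ennreal (2 * d) * A) = ennreal (1 / (2 * sqrt d) * (2 * d)) * A"
      by (rule ennreal_mult_assoc') (use sd in auto)
    also have "1 / (2 * sqrt d) * (2 * d) = sqrt d"
    proof -
      have "sqrt (real d) * sqrt (real d) = real d" by simp
      then show ?thesis using sd by (simp add: field_simps)
    qed
    finally show ?thesis .
  qed
  have v: "B = ennreal (2 / sqrt (2 * pi / m2))"
    unfolding B_def G_def m2_def by (rule F1[OF g False])
  have fin_eq: "sqrt (pi / 2) * (2 / sqrt (2 * pi / m2)) = sqrt m2"
  proof -
    have "sqrt (2 * pi / m2) = sqrt (2 * pi) / sqrt m2" by (simp add: real_sqrt_divide)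
    moreover have "sqrt (pi / 2) * 2 = sqrt (2 * pi)"
    proof -
      have s4: "sqrt 4 = (2::real)" by (rule real_sqrt_unique) auto
      have "sqrt (pi / 2) * 2 = sqrt (pi / 2) * sqrt 4" unfolding s4 ..
      also have "\<dots> = sqrt (pi / 2 * 4)" by (rule real_sqrt_mult[symmetric])
      also have "pi / 2 * 4 = 2 * pi" by simp
      finally show ?thesis .
    qed
    ultimately show ?thesis using m2 by (simp add: field_simps)
  qed
  have spd: "sqrt (pi * real CARD('d) / 2) = sqrt (pi / 2) * sqrt d"
    unfolding d_def by (simp add: real_sqrt_mult[symmetric])
  have "ennreal (w * inv_norm p L) = ennreal w * ennreal (sqrt (pi / 2)) * B"
  proof -
    have "ennreal w * ennreal (sqrt (pi / 2)) * ennreal (2 / sqrt (2 * pi / m2))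
        = ennreal (w * (sqrt (pi / 2) * (2 / sqrt (2 * pi / m2))))"
      using w m2 by (subst ennreal_mult3) auto
    then show ?thesis unfolding inm v fin_eq by simp
  qed
  also have "\<dots> \<le> ennreal w * ennreal (sqrt (pi / 2)) * (ennreal (sqrt d) * A)"
    by (rule mult_left_mono[OF iv]) simp
  also have "\<dots> = ennreal (sqrt (pi * real CARD('d) / 2)) * (ennreal w * A)"
    unfolding spd by (simp add: ennreal_mult ac_simps)
  also have "\<dots> \<le> ennreal (sqrt (pi * real CARD('d) / 2)) * (\<integral>\<^sup>+v. ennreal (gf v) \<partial>G)"
    by (rule mult_left_mono[OF i]) simp
  finally show ?thesis unfolding G_def .
qed

lemma Qf_add:
  fixes L :: "real^'d^'d"
  assumes "transpose L = L"
  shows "Qf L (a + b) = Qf L a + 2 * (a \<bullet> (L *v b)) + Qf L b"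
proof -
  have "b \<bullet> (L *v a) = a \<bullet> (L *v b)" using sym_inner[OF assms, of b a] by simp
  then show ?thesis
    by (simp add: Qf_def matrix_vector_right_distrib inner_add_left inner_add_right)
qed

lemma bilin_scale: "(c *\<^sub>R a) \<bullet> ((L::real^'d^'d) *v (e *\<^sub>R b)) = c * e * (a \<bullet> (L *v b))"
  by (simp add: scaleR_mulv matrix_vector_mult_scaleR)

lemma CS_pdm:
  fixes L :: "real^'d^'d"
  assumes L: "pdm L"
  shows "\<bar>q \<bullet> v\<bar> \<le> inv_norm q L * sqrt (Qf L v)"
proof -
  have sym: "transpose L = L" using L unfolding pdm_def by auto
  define x where "x = matrix_inv L *v q"
  have Lx: "L *v x = q" unfolding x_def by (rule pdm_inv_vec[OF L])
  define \<alpha> where "\<alpha> = Qf L v"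
  define \<beta> where "\<beta> = x \<bullet> (L *v v)"
  define \<gamma> where "\<gamma> = Qf L x"
  have qv: "q \<bullet> v = \<beta>"
    unfolding \<beta>_def using sym_inner[OF sym, of x v] Lx by (simp add: inner_commute)
  have \<gamma>: "\<gamma> = q \<bullet> (matrix_inv L *v q)" unfolding \<gamma>_def Qf_def Lx x_def[symmetric] by (simp add: inner_commute)
  have an: "\<alpha> \<ge> 0" unfolding \<alpha>_def by (rule Qf_nonneg[OF L])
  have gn: "\<gamma> \<ge> 0" unfolding \<gamma>_def by (rule Qf_nonneg[OF L])
  have key: "\<beta>\<^sup>2 \<le> \<alpha> * \<gamma>"
  proof (cases "\<alpha> = 0")
    case True
    then have "v = 0" unfolding \<alpha>_def by (rule Qf_zero_iff[OF L])
    then show ?thesis using an gn by (simp add: \<beta>_def)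
  next
    case False
    then have ap: "\<alpha> > 0" using an by simp
    have "0 \<le> Qf L (\<alpha> *\<^sub>R x + (- \<beta>) *\<^sub>R v)" by (rule Qf_nonneg[OF L])
    also have "\<dots> = \<alpha>\<^sup>2 * \<gamma> + 2 * (\<alpha> * (- \<beta>) * \<beta>) + \<beta>\<^sup>2 * \<alpha>"
      unfolding Qf_add[OF sym] bilin_scale Qf_scale \<alpha>_def \<beta>_def \<gamma>_def by simp
    also have "\<dots> = \<alpha> * (\<alpha> * \<gamma> - \<beta>\<^sup>2)" by (simp add: power2_eq_square algebra_simps)
    finally have "0 \<le> \<alpha> * \<gamma> - \<beta>\<^sup>2" using ap by (simp add: zero_le_mult_iff)
    then show ?thesis by simp
  qed
  have "\<bar>\<beta>\<bar> = sqrt (\<beta>\<^sup>2)" by simp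
  also have "\<dots> \<le> sqrt (\<alpha> * \<gamma>)" using key by (rule real_sqrt_le_mono)
  also have "\<dots> = sqrt \<gamma> * sqrt \<alpha>" by (simp add: real_sqrt_mult)
  finally show ?thesis unfolding qv inv_norm_def \<gamma>[symmetric] \<alpha>_def .
qed

lemma inv_norm_nonneg:
  fixes L :: "real^'d^'d"
  assumes L: "pdm L"
  shows "inv_norm q L \<ge> 0"
proof -
  have "q \<bullet> (matrix_inv L *v q) = Qf L (matrix_inv L *v q)"
    unfolding Qf_def pdm_inv_vec[OF L] by (simp add: inner_commute)
  then show ?thesis unfolding inv_norm_def using Qf_nonneg[OF L] by simp
qed

lemma inv_norm_bound:
  fixes L :: "real^'d^'d"
  assumes L: "pdm L" and e: "e > 0" "\<And>v. e * (norm v)\<^sup>2 \<le> Qf L v"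
  shows "inv_norm q L \<le> norm q / sqrt e"
proof -
  define x where "x = matrix_inv L *v q"
  have Lx: "L *v x = q" unfolding x_def by (rule pdm_inv_vec[OF L])
  define m where "m = q \<bullet> x"
  have mQ: "m = Qf L x" unfolding m_def Qf_def Lx by (simp add: inner_commute)
  have "e * (norm x)\<^sup>2 \<le> m" using e(2)[of x] mQ by simp
  also have "m \<le> norm q * norm x" unfolding m_def by (rule order_trans[OF abs_ge_self Cauchy_Schwarz_ineq2])
  finally have 1: "e * (norm x)\<^sup>2 \<le> norm q * norm x" .
  have nx: "norm x \<le> norm q / e"
  proof (cases "norm x = 0")
    case True then show ?thesis using e(1) by simp
  next
    case False
    then have "e * norm x \<le> norm q" using 1 by (simp add: power2_eq_square mult.assoc[symmetric] mult_right_le_imp_le)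
    then show ?thesis using e(1) by (simp add: field_simps)
  qed
  have "m \<le> norm q * (norm q / e)"
    using \<open>m \<le> norm q * norm x\<close> nx by (meson mult_left_mono norm_ge_zero order_trans)
  then have "sqrt m \<le> sqrt ((norm q)\<^sup>2 / e)" by (simp add: power2_eq_square)
  also have "\<dots> = norm q / sqrt e" using e(1) by (simp add: real_sqrt_divide)
  finally show ?thesis unfolding inv_norm_def x_def[symmetric] m_def[symmetric] .
qed

lemma inv_norm_cont: "continuous_on UNIV (\<lambda>q. inv_norm q L)"
  unfolding inv_norm_def by (intro continuous_intros linear_continuous_on matrix_vector_mul_linear)

lemma inv_norm_meas[measurable]: "(\<lambda>q. inv_norm q L) \<in> borel_measurable borel"
  by (rule borel_measurable_continuous_onI[OF inv_norm_cont])

lemma mudot_cont: "continuous_on UNIV mudot"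
proof -
  have "continuous_on UNIV mu" unfolding mu_def[abs_def]
    by (intro continuous_intros) (auto simp: one_plus_exp_ne)
  then show ?thesis unfolding mudot_def[abs_def] by (intro continuous_intros)
qed

lemma mudot_meas[measurable]: "mudot \<in> borel_measurable borel"
  by (rule borel_measurable_continuous_onI[OF mudot_cont])

theorem mainTheorem9:
  fixes \<nu> :: "'s measure"
    and Act :: "'s \<Rightarrow> 'a set"
    and phi :: "'s \<Rightarrow> 'a \<Rightarrow> real^'d"
    and lam S \<delta> :: real
    and beta :: "real \<Rightarrow> nat \<Rightarrow> real"
    and t :: nat
    and s :: "nat \<Rightarrow> 's" and a :: "nat \<Rightarrow> 'a" and x :: "nat \<Rightarrow> real"
    and AMU :: "'s \<Rightarrow> 'a" and \<omega>MU :: "'s \<Rightarrow> real^'d"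
    and Ach :: "'s \<Rightarrow> real^'d \<Rightarrow> 'a"
  defines "L \<equiv> Lt lam S (beta \<delta>) phi s a x t"
    and "\<theta>b \<equiv> theta_bar lam S phi s a x t"
    and "E \<equiv> Ebar lam S (beta \<delta>) phi s a x t"
    and "V \<equiv> Vset lam S (beta \<delta>) phi s a x t"
  assumes prob: "prob_space \<nu>"
    and Act_fin: "\<And>c. finite (Act c)" and Act_ne: "\<And>c. Act c \<noteq> {}"
    and phi_bd: "\<And>c b. b \<in> Act c \<Longrightarrow> norm (phi c b) \<le> 1"
    and S_nonneg: "0 \<le> S"
    and lam_pos: "0 < lam"
    and delta: "0 \<le> \<delta>" "\<delta> < 1"
    and beta_pos: "\<And>i. 0 < beta \<delta> i"
    and t_ge: "1 \<le> t"
    and hist: "\<And>i. 1 \<le> i \<Longrightarrow> i < t \<Longrightarrow> a i \<in> Act (s i) \<and> x i \<in> {0, 1}"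
    and AMU: "\<And>c. AMU c \<in> Act c \<and>
       (\<forall>b\<in>Act c. Sup ((\<lambda>\<theta>. Ubonus phi c b \<theta> L) ` V) \<le> Sup ((\<lambda>\<theta>. Ubonus phi c (AMU c) \<theta> L) ` V))"
    and \<omega>MU: "\<And>c. \<omega>MU c \<in> E \<and> (\<forall>\<theta>\<in>E. mudot (phi c (AMU c) \<bullet> \<omega>MU c) \<le> mudot (phi c (AMU c) \<bullet> \<theta>))"
    and Ach: "\<And>c v. Ach c v \<in> Act c \<and>
       (\<forall>b\<in>Act c. mudot (phi c b \<bullet> \<theta>b) * \<bar>phi c b \<bullet> v\<bar>
                  \<le> mudot (phi c (Ach c v) \<bullet> \<theta>b) * \<bar>phi c (Ach c v) \<bullet> v\<bar>)"
    and meas_AMU: "(\<lambda>c. phi c (AMU c)) \<in> borel_measurable \<nu>"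
    and meas_\<omega>MU: "\<omega>MU \<in> borel_measurable \<nu>"
    and meas_Ach: "(\<lambda>(c, v). phi c (Ach c v)) \<in> borel_measurable (\<nu> \<Otimes>\<^sub>M gaussian_prec L)"
  shows "(\<integral>c. Ubonus phi c (AMU c) (\<omega>MU c) L \<partial>\<nu>)
         \<le> sqrt (pi * real CARD('d) / 2) *
           (\<integral>cv. Ubonus phi (fst cv) (Ach (fst cv) (snd cv)) \<theta>b L \<partial>(\<nu> \<Otimes>\<^sub>M gaussian_prec L))"
proof -
  define G where "G = gaussian_prec L"
  define K where "K = sqrt (pi * real CARD('d) / 2)"
  have gL: "good L" unfolding L_def Lt_def by (rule Lmat_good[OF lam_pos S_nonneg])
  have pL: "pdm L" using gL unfolding good_def by auto
  obtain e where e: "e > 0" "\<And>v. e * (norm v)\<^sup>2 \<le> Qf L v" using pL unfolding pdm_def by auto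
  interpret N: prob_space \<nu> by (rule prob)
  interpret GG: prob_space G unfolding G_def by (rule gauss_prob[OF gL])
  interpret P: pair_prob_space \<nu> G by unfold_locales
  have sG: "sets G = sets borel" unfolding G_def gaussian_prec_eq by simp
  have \<theta>bE: "\<theta>b \<in> E" unfolding \<theta>b_def E_def by (rule theta_bar_in_Ebar[OF S_nonneg])
  define Fq where "Fq q = mudot (q \<bullet> \<theta>b) * inv_norm q L" for q
  have Fq_meas[measurable]: "Fq \<in> borel_measurable borel" unfolding Fq_def by measurable
  have Fq_nn: "Fq q \<ge> 0" for q unfolding Fq_def using mudot_nonneg inv_norm_nonneg[OF pL] by simp
  define UL where "UL c = Ubonus phi c (AMU c) (\<omega>MU c) L" for c
  define UR where "UR cv = Ubonus phi (fst cv) (Ach (fst cv) (snd cv)) \<theta>b L" for cv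
  have UR_Fq: "UR cv = Fq (phi (fst cv) (Ach (fst cv) (snd cv)))" for cv
    unfolding UR_def Fq_def Ubonus_def ..
  have UL_nn: "UL c \<ge> 0" for c
    unfolding UL_def Ubonus_def using mudot_nonneg inv_norm_nonneg[OF pL] by simp
  have UR_nn: "UR cv \<ge> 0" for cv unfolding UR_Fq by (rule Fq_nn)
  have [measurable]: "(\<lambda>c. phi c (AMU c)) \<in> borel_measurable \<nu>" by (rule meas_AMU)
  have [measurable]: "\<omega>MU \<in> borel_measurable \<nu>" by (rule meas_\<omega>MU)
  have UL_meas: "UL \<in> borel_measurable \<nu>"
  proof -
    have f1: "(\<lambda>c. mudot (phi c (AMU c) \<bullet> \<omega>MU c)) \<in> borel_measurable \<nu>"
      using measurable_compose[OF borel_measurable_inner[OF meas_AMU meas_\<omega>MU] mudot_meas] by (simp add: o_def)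
    have f2: "(\<lambda>c. inv_norm (phi c (AMU c)) L) \<in> borel_measurable \<nu>"
      using measurable_compose[OF meas_AMU inv_norm_meas] by simp
    show ?thesis unfolding UL_def Ubonus_def using f1 f2 by measurable
  qed
  have meas_Ach': "(\<lambda>cv. phi (fst cv) (Ach (fst cv) (snd cv))) \<in> borel_measurable (\<nu> \<Otimes>\<^sub>M G)"
    using meas_Ach unfolding G_def by (simp add: case_prod_beta')
  have UR_meas: "UR \<in> borel_measurable (\<nu> \<Otimes>\<^sub>M G)"
    unfolding UR_Fq using measurable_compose[OF meas_Ach' Fq_meas] by (simp add: o_def)
  have URm: "(\<lambda>cv. ennreal (UR cv)) \<in> borel_measurable (\<nu> \<Otimes>\<^sub>M G)"
    using UR_meas by measurable
  have pt: "ennreal (UL c) \<le> ennreal K * (\<integral>\<^sup>+v. ennreal (UR (c, v)) \<partial>G)" if c: "c \<in> space \<nu>" for c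
  proof -
    define p where "p = phi c (AMU c)"
    define w where "w = mudot (p \<bullet> \<theta>b)"
    have w: "w \<ge> 0" unfolding w_def by (rule mudot_nonneg)
    have "UL c \<le> w * inv_norm p L"
    proof -
      have "mudot (p \<bullet> \<omega>MU c) \<le> w" unfolding w_def p_def using \<omega>MU[of c] \<theta>bE by blast
      then show ?thesis unfolding UL_def Ubonus_def p_def[symmetric]
        by (rule mult_right_mono) (rule inv_norm_nonneg[OF pL])
    qed
    then have 1: "ennreal (UL c) \<le> ennreal (w * inv_norm p L)" by (rule ennreal_leI)
    define gf where "gf v = UR (c, v)" for v
    have gfm: "gf \<in> borel_measurable G"
      unfolding gf_def by (rule measurable_Pair2[OF UR_meas c])
    have gfm': "gf \<in> borel_measurable borel"
      using gfm measurable_cong_sets[OF sG refl] by blast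
    have gb: "w * \<bar>p \<bullet> v\<bar> \<le> gf v * sqrt (Qf L v)" for v
    proof -
      define q where "q = phi c (Ach c v)"
      have "w * \<bar>p \<bullet> v\<bar> \<le> mudot (q \<bullet> \<theta>b) * \<bar>q \<bullet> v\<bar>"
        unfolding w_def p_def q_def using Ach[of c v] AMU[of c] by blast
      also have "\<dots> \<le> mudot (q \<bullet> \<theta>b) * (inv_norm q L * sqrt (Qf L v))"
        by (rule mult_left_mono[OF CS_pdm[OF pL] mudot_nonneg])
      also have "\<dots> = gf v * sqrt (Qf L v)"
        unfolding gf_def UR_Fq Fq_def q_def by simp
      finally show ?thesis .
    qed
    have 2: "ennreal (w * inv_norm p L) \<le> ennreal K * (\<integral>\<^sup>+v. ennreal (gf v) \<partial>G)"
      unfolding K_def G_def by (rule core[OF gL w gfm' _ gb]) (simp add: gf_def UR_nn)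
    show ?thesis using 1 2 unfolding gf_def by simp
  qed
  have LHS: "(\<integral>\<^sup>+c. ennreal (UL c) \<partial>\<nu>) \<le> ennreal K * (\<integral>\<^sup>+cv. ennreal (UR cv) \<partial>(\<nu> \<Otimes>\<^sub>M G))"
  proof -
    have "(\<integral>\<^sup>+c. ennreal (UL c) \<partial>\<nu>) \<le> (\<integral>\<^sup>+c. ennreal K * (\<integral>\<^sup>+v. ennreal (UR (c, v)) \<partial>G) \<partial>\<nu>)"
      by (rule nn_integral_mono) (rule pt)
    also have "\<dots> = ennreal K * (\<integral>\<^sup>+c. (\<integral>\<^sup>+v. ennreal (UR (c, v)) \<partial>G) \<partial>\<nu>)"
      by (rule nn_integral_cmult) (rule GG.borel_measurable_nn_integral_fst[OF URm])
    also have "(\<integral>\<^sup>+c. (\<integral>\<^sup>+v. ennreal (UR (c, v)) \<partial>G) \<partial>\<nu>) = (\<integral>\<^sup>+cv. ennreal (UR cv) \<partial>(\<nu> \<Otimes>\<^sub>M G))"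
      by (rule GG.nn_integral_fst[OF URm])
    finally show ?thesis .
  qed
  have fin: "(\<integral>\<^sup>+cv. ennreal (UR cv) \<partial>(\<nu> \<Otimes>\<^sub>M G)) < top"
  proof -
    define M where "M = 1 / 4 * (1 / sqrt e)"
    have bd: "UR cv \<le> M" for cv
    proof -
      define q where "q = phi (fst cv) (Ach (fst cv) (snd cv))"
      have qn: "norm q \<le> 1" unfolding q_def using Ach phi_bd by blast
      have "inv_norm q L \<le> norm q / sqrt e" by (rule inv_norm_bound[OF pL e])
      also have "\<dots> \<le> 1 / sqrt e" using qn e(1) by (simp add: divide_right_mono)
      finally have i: "inv_norm q L \<le> 1 / sqrt e" .
      have "UR cv = mudot (q \<bullet> \<theta>b) * inv_norm q L" unfolding UR_Fq Fq_def q_def ..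
      also have "\<dots> \<le> 1 / 4 * (1 / sqrt e)"
        by (rule mult_mono[OF mudot_le i]) (auto intro: inv_norm_nonneg[OF pL])
      finally show ?thesis unfolding M_def .
    qed
    have "(\<integral>\<^sup>+cv. ennreal (UR cv) \<partial>(\<nu> \<Otimes>\<^sub>M G)) \<le> (\<integral>\<^sup>+cv. ennreal M \<partial>(\<nu> \<Otimes>\<^sub>M G))"
      by (rule nn_integral_mono) (simp add: bd ennreal_leI)
    also have "\<dots> = ennreal M" by (simp add: P.emeasure_space_1)
    finally show ?thesis by (simp add: order_le_less_trans)
  qed
  have "(\<integral>c. UL c \<partial>\<nu>) = enn2real (\<integral>\<^sup>+c. ennreal (UL c) \<partial>\<nu>)"
    by (rule integral_eq_nn_integral[OF UL_meas]) (simp add: UL_nn)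
  also have "\<dots> \<le> enn2real (ennreal K * (\<integral>\<^sup>+cv. ennreal (UR cv) \<partial>(\<nu> \<Otimes>\<^sub>M G)))"
    by (rule enn2real_mono[OF LHS]) (simp add: fin ennreal_mult_less_top)
  also have "\<dots> = K * enn2real (\<integral>\<^sup>+cv. ennreal (UR cv) \<partial>(\<nu> \<Otimes>\<^sub>M G))"
    unfolding K_def by (simp add: enn2real_mult)
  also have "enn2real (\<integral>\<^sup>+cv. ennreal (UR cv) \<partial>(\<nu> \<Otimes>\<^sub>M G)) = (\<integral>cv. UR cv \<partial>(\<nu> \<Otimes>\<^sub>M G))"
    by (rule integral_eq_nn_integral[OF UR_meas, symmetric]) (simp add: UR_nn)
  finally show ?thesis unfolding UL_def UR_def K_def G_def .
qed

end
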